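(* Let $(T^{E}_{m},T^{\mathbb{K}}_{m})_{m\in M}$ be a strong generator for $(\mathcal{FV},E)$. If one of the following conditions holds, then $\mathcal{FV}(\Omega,E)\subset\mathcal{FV}(\Omega,E)_\kappa$: (a) $\mathcal{FV}(\Omega)$ is a semi-Montel space; (b) for every $f\in\mathcal{FV}(\Omega,E)$, $j\in J$, $m\in M$ there is a precompact set $K\subset E$ with $N_{j,m}(f)\subset K$; (c) $E$ is a semi-Montel space or a Schwartz space; (d) there are a set $X$, a family $\mathfrak{K}$ of sets with $\bigcup_{K\in\mathfrak{K}}K\subset X$ and a map $\pi\colon\bigcup_{m\in M}\omega_m\to X$ such that every $f\in\mathcal{FV}(\Omega,E)$ satisfies: for all $\varepsilon>0$, $j\in J$, $m\in M$, $\alpha\in\mathfrak{A}$ there is $K\in\mathfrak{K}$ with (i) $\sup_{x\in\omega_m,\ \pi(x)\notin K}p_\alpha(T^E_m(f)(x))\nu_{j,m}(x)<\varepsilon$ and (ii) $\{T^E_m(f)(x)\nu_{j,m}(x): x\in\omega_m,\ \pi(x)\in K\}$ is precompact in $E$.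
   Context: $\mathbb{K}\in\{\mathbb{R},\mathbb{C}\}$, $E$ a non-trivial locally convex Hausdorff space over $\mathbb{K}$ with directed fundamental system of seminorms $(p_\alpha)_{\alpha\in\mathfrak{A}}$. Let $\Omega$ be a non-empty set, $J,M$ non-empty index sets, $(\omega_m)_{m\in M}$ non-empty sets and $\nu_{j,m}\colon\omega_m\to[0,\infty)$ such that for all $m$, $x\in\omega_m$ some $\nu_{j,m}(x)>0$. For $Y\in\{\mathbb{K},E\}$ (for $\mathbb{K}$ only $|\cdot|$), let $\operatorname{AP}(\Omega,Y)\subset Y^\Omega$ be a linear subspace and $T^Y_m\colon\operatorname{dom}T^Y_m\to Y^{\omega_m}$ linear maps on linear subspaces $\operatorname{dom}T^Y_m\subset Y^\Omega$. $\mathcal{FV}(\Omega,Y):=\{f\in\operatorname{AP}(\Omega,Y)\cap\bigcap_m\operatorname{dom}T^Y_m: |f|_{j,m,\alpha}:=\sup_{x\in\omega_m}p_\alpha(T^Y_m(f)(x))\nu_{j,m}(x)<\infty\ \forall j,m,\alpha\}$ with these seminorms; $\mathcal{FV}(\Omega):=\mathcal{FV}(\Omega,\mathbb{K})$. Dom-space: Hausdorff, directed seminorms, and for $Y=\mathbb{K}$ all point evaluations $\delta_x$ are in $\mathcal{FV}(\Omega)'$. Generator for $(\mathcal{FV},E)$: $(T^E_m,T^{\mathbb{K}}_m)_{m\in M}$ with $\mathcal{FV}(\Omega)$, $\mathcal{FV}(\Omega,E)$ dom-spaces over the same $J,M,\omega_m,\nu_{j,m}$. Strong: for all $e'\in E'$,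 $f\in\mathcal{FV}(\Omega,E)$, $m$: $e'\circ f\in\operatorname{AP}(\Omega,\mathbb{K})\cap\operatorname{dom}T^{\mathbb{K}}_m$ and $T^{\mathbb{K}}_m(e'\circ f)=e'\circ T^E_m(f)$ on $\omega_m$. $\mathcal{FV}(\Omega,E)_\sigma:=\{f\colon\Omega\to E: e'\circ f\in\mathcal{FV}(\Omega)\ \forall e'\in E'\}$, $R_f(e'):=e'\circ f$; $B_\alpha:=\{x\in E: p_\alpha(x)<1\}$ with polar $B_\alpha^\circ$; $\mathcal{FV}(\Omega,E)_\kappa:=\{f\in\mathcal{FV}(\Omega,E)_\sigma: R_f(B_\alpha^\circ)$ relatively compact in $\mathcal{FV}(\Omega)$ for every $\alpha\}$. $N_{j,m}(f):=\{T^E_m(f)(x)\nu_{j,m}(x): x\in\omega_m\}$. *)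

theory Defs
  imports "HOL-Analysis.Analysis" "HOL-Library.Function_Algebras"
begin

definition is_seminorm :: "('k::real_normed_field \<Rightarrow> 'v::ab_group_add \<Rightarrow> 'v) \<Rightarrow> ('v \<Rightarrow> real) \<Rightarrow> bool" where
  "is_seminorm sc q \<longleftrightarrow>
     (\<forall>x y. q (x + y) \<le> q x + q y) \<and> (\<forall>c x. q (sc c x) = norm c * q x)"

definition sn_top :: "'v::ab_group_add set \<Rightarrow> ('i \<Rightarrow> 'v \<Rightarrow> real) \<Rightarrow> 'v topology" where
  "sn_top S q = subtopology
     (topology_generated_by {{y. q i (y - x) < e} | i x e. x \<in> S \<and> e > 0}) S"

definition precompact_in :: "'v::ab_group_add topology \<Rightarrow> 'v set \<Rightarrow> bool" where
  "precompact_in T K \<longleftrightarrow>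
     (\<forall>U. openin T U \<and> 0 \<in> U \<longrightarrow> (\<exists>F. finite F \<and> K \<subseteq> (\<Union>x\<in>F. (\<lambda>u. x + u) ` U)))"

definition tvs_bounded :: "('k::real_normed_field \<Rightarrow> 'v::ab_group_add \<Rightarrow> 'v) \<Rightarrow> 'v topology \<Rightarrow> 'v set \<Rightarrow> bool" where
  "tvs_bounded sc T B \<longleftrightarrow>
     (\<forall>U. openin T U \<and> 0 \<in> U \<longrightarrow>
        (\<exists>r>0. \<forall>c. norm c \<ge> r \<longrightarrow> B \<subseteq> sc c ` U))"

definition rel_compact_in :: "'v topology \<Rightarrow> 'v set \<Rightarrow> bool" where
  "rel_compact_in T A \<longleftrightarrow> compactin T (T closure_of A)"

definition semi_montel :: "('k::real_normed_field \<Rightarrow> 'v::ab_group_add \<Rightarrow> 'v) \<Rightarrow> 'v set \<Rightarrow> 'v topology \<Rightarrow> bool" where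
  "semi_montel sc S T \<longleftrightarrow> (\<forall>B. B \<subseteq> S \<and> tvs_bounded sc T B \<longrightarrow> rel_compact_in T B)"

definition schwartz_space :: "('k::real_normed_field \<Rightarrow> 'v::ab_group_add \<Rightarrow> 'v) \<Rightarrow> 'v topology \<Rightarrow> bool" where
  "schwartz_space sc T \<longleftrightarrow>
     (\<forall>U. openin T U \<and> 0 \<in> U \<longrightarrow>
        (\<exists>V. openin T V \<and> 0 \<in> V \<and>
           (\<forall>\<epsilon>::real. \<epsilon> > 0 \<longrightarrow>
              (\<exists>F. finite F \<and> V \<subseteq> (\<Union>x\<in>F. (\<lambda>u. x + u) ` (sc (of_real \<epsilon>) ` U))))))"

definition dual_space :: "('k::real_normed_field \<Rightarrow> 'e::ab_group_add \<Rightarrow> 'e) \<Rightarrow> ('a \<Rightarrow> 'e \<Rightarrow> real) \<Rightarrow> ('e \<Rightarrow> 'k) set" where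
  "dual_space sc p = {e'. Vector_Spaces.linear sc (*) e' \<and>
                            continuous_map (sn_top UNIV p) euclidean e'}"

definition polar :: "('k::real_normed_field \<Rightarrow> 'e::ab_group_add \<Rightarrow> 'e) \<Rightarrow> ('a \<Rightarrow> 'e \<Rightarrow> real) \<Rightarrow> 'e set \<Rightarrow> ('e \<Rightarrow> 'k) set" where
  "polar sc p B = {e' \<in> dual_space sc p. \<forall>x\<in>B. norm (e' x) \<le> 1}"

definition fun_subspace :: "('k::real_normed_field \<Rightarrow> 'y::ab_group_add \<Rightarrow> 'y) \<Rightarrow> ('w \<Rightarrow> 'y) set \<Rightarrow> bool" where
  "fun_subspace sc A \<longleftrightarrow> (\<lambda>_. 0) \<in> A \<and>
     (\<forall>f\<in>A. \<forall>g\<in>A. (\<lambda>w. f w + g w) \<in> A) \<and> (\<forall>c. \<forall>f\<in>A. (\<lambda>w. sc c (f w)) \<in> A)"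

definition lin_on :: "('k::real_normed_field \<Rightarrow> 'y::ab_group_add \<Rightarrow> 'y) \<Rightarrow> ('w \<Rightarrow> 'y) set \<Rightarrow> 'x set
                      \<Rightarrow> (('w \<Rightarrow> 'y) \<Rightarrow> ('x \<Rightarrow> 'y)) \<Rightarrow> bool" where
  "lin_on sc D \<omega> T \<longleftrightarrow>
     (\<forall>f\<in>D. \<forall>g\<in>D. \<forall>x\<in>\<omega>. T (\<lambda>w. f w + g w) x = T f x + T g x) \<and>
     (\<forall>c. \<forall>f\<in>D. \<forall>x\<in>\<omega>. T (\<lambda>w. sc c (f w)) x = sc c (T f x))"

definition FVE :: "('a \<Rightarrow> 'e \<Rightarrow> real) \<Rightarrow> ('w \<Rightarrow> 'e) set \<Rightarrow> ('m \<Rightarrow> ('w \<Rightarrow> 'e) set)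
     \<Rightarrow> ('m \<Rightarrow> ('w \<Rightarrow> 'e) \<Rightarrow> ('x \<Rightarrow> 'e)) \<Rightarrow> ('m \<Rightarrow> 'x set) \<Rightarrow> ('j \<Rightarrow> 'm \<Rightarrow> 'x \<Rightarrow> real)
     \<Rightarrow> ('w \<Rightarrow> 'e) set" where
  "FVE p AP Dm T \<omega> \<nu> = {f. f \<in> AP \<and> (\<forall>m. f \<in> Dm m) \<and>
      (\<forall>j m \<alpha>. bdd_above ((\<lambda>x. p \<alpha> (T m f x) * \<nu> j m x) ` \<omega> m))}"

definition FVE_sn :: "('a \<Rightarrow> 'e \<Rightarrow> real) \<Rightarrow> ('m \<Rightarrow> ('w \<Rightarrow> 'e) \<Rightarrow> ('x \<Rightarrow> 'e)) \<Rightarrow> ('m \<Rightarrow> 'x set)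
     \<Rightarrow> ('j \<Rightarrow> 'm \<Rightarrow> 'x \<Rightarrow> real) \<Rightarrow> 'j \<times> 'm \<times> 'a \<Rightarrow> ('w \<Rightarrow> 'e) \<Rightarrow> real" where
  "FVE_sn p T \<omega> \<nu> i f = (case i of (j, m, \<alpha>) \<Rightarrow> (SUP x\<in>\<omega> m. p \<alpha> (T m f x) * \<nu> j m x))"

definition FVK :: "('w \<Rightarrow> 'k::real_normed_field) set \<Rightarrow> ('m \<Rightarrow> ('w \<Rightarrow> 'k) set)
     \<Rightarrow> ('m \<Rightarrow> ('w \<Rightarrow> 'k) \<Rightarrow> ('x \<Rightarrow> 'k)) \<Rightarrow> ('m \<Rightarrow> 'x set) \<Rightarrow> ('j \<Rightarrow> 'm \<Rightarrow> 'x \<Rightarrow> real)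
     \<Rightarrow> ('w \<Rightarrow> 'k) set" where
  "FVK AP Dm T \<omega> \<nu> = {f. f \<in> AP \<and> (\<forall>m. f \<in> Dm m) \<and>
      (\<forall>j m. bdd_above ((\<lambda>x. norm (T m f x) * \<nu> j m x) ` \<omega> m))}"

definition FVK_sn :: "('m \<Rightarrow> ('w \<Rightarrow> 'k::real_normed_field) \<Rightarrow> ('x \<Rightarrow> 'k)) \<Rightarrow> ('m \<Rightarrow> 'x set)
     \<Rightarrow> ('j \<Rightarrow> 'm \<Rightarrow> 'x \<Rightarrow> real) \<Rightarrow> 'j \<times> 'm \<Rightarrow> ('w \<Rightarrow> 'k) \<Rightarrow> real" where
  "FVK_sn T \<omega> \<nu> i f = (case i of (j, m) \<Rightarrow> (SUP x\<in>\<omega> m. norm (T m f x) * \<nu> j m x))"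

definition sn_hausdorff :: "'v::zero set \<Rightarrow> ('i \<Rightarrow> 'v \<Rightarrow> real) \<Rightarrow> bool" where
  "sn_hausdorff S q \<longleftrightarrow> (\<forall>f\<in>S. f \<noteq> 0 \<longrightarrow> (\<exists>i. q i f \<noteq> 0))"

definition sn_directed :: "'v set \<Rightarrow> ('i \<Rightarrow> 'v \<Rightarrow> real) \<Rightarrow> bool" where
  "sn_directed S q \<longleftrightarrow> (\<forall>i1 i2. \<exists>i3 C. C > 0 \<and> (\<forall>f\<in>S. max (q i1 f) (q i2 f) \<le> C * q i3 f))"

definition FV_sigma :: "('e \<Rightarrow> 'k) set \<Rightarrow> ('w \<Rightarrow> 'k) set \<Rightarrow> ('w \<Rightarrow> 'e) set" where
  "FV_sigma E' FVk = {f. \<forall>e'\<in>E'. e' \<circ> f \<in> FVk}"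

definition FV_kappa :: "('k::real_normed_field \<Rightarrow> 'e::ab_group_add \<Rightarrow> 'e) \<Rightarrow> ('a \<Rightarrow> 'e \<Rightarrow> real)
     \<Rightarrow> ('w \<Rightarrow> 'k) set \<Rightarrow> ('w \<Rightarrow> 'k) topology \<Rightarrow> ('w \<Rightarrow> 'e) set" where
  "FV_kappa sc p FVk Tk = {f \<in> FV_sigma (dual_space sc p) FVk.
      \<forall>\<alpha>. rel_compact_in Tk ((\<lambda>e'. e' \<circ> f) ` polar sc p {x. p \<alpha> x < 1})}"

end

theory Submission
  imports Defs "HOL-Computational_Algebra.Fundamental_Theorem_Algebra"
begin


definition evk :: "real poly \<Rightarrow> 'k::real_normed_field \<Rightarrow> 'k" where
  "evk p x = poly (map_poly of_real p) x"

lemma map_of_real_add: "map_poly (of_real :: real \<Rightarrow> 'k::real_normed_field) (p + q) = map_poly of_real p + map_poly of_real q"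
  by (intro poly_eqI) (simp add: coeff_map_poly)

lemma map_of_real_smult: "map_poly (of_real :: real \<Rightarrow> 'k::real_normed_field) (smult a q) = smult (of_real a) (map_poly of_real q)"
  by (intro poly_eqI) (simp add: coeff_map_poly)

lemma map_of_real_pCons: "map_poly (of_real :: real \<Rightarrow> 'k::real_normed_field) (pCons a q) = pCons (of_real a) (map_poly of_real q)"
  by (simp add: map_poly_pCons)

lemma map_of_real_mult: "map_poly (of_real :: real \<Rightarrow> 'k::real_normed_field) (p * q) = map_poly of_real p * map_poly of_real q"
proof (induction p rule: pCons_induct)
  case 0 then show ?case by simp
next
  case (pCons a p)
  then show ?case by (simp add: map_of_real_add map_of_real_smult map_of_real_pCons)
qed

lemma evk_mult: "evk (p * q) x = evk p x * evk q x"
  by (simp add: evk_def map_of_real_mult)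

lemma evk_add: "evk (p + q) x = evk p x + evk q x"
  by (simp add: evk_def map_of_real_add)

lemma evk_power: "evk (p ^ n) x = evk p x ^ n"
  by (induction n) (simp_all add: evk_mult[unfolded evk_def] evk_def)

lemma evk_const: "evk [:c:] x = of_real c"
  by (simp add: evk_def map_of_real_pCons)

definition pR :: "complex \<Rightarrow> real poly" where
  "pR w = [:(cmod w)^2, -2 * Re w, 1:]"

lemma evk_pR: "evk (pR w) (x::'k::real_normed_field) = (x - of_real (Re w))^2 + of_real ((Im w)^2)"
proof -
  have "evk (pR w) x = of_real ((cmod w)^2) + x * (of_real (-2 * Re w) + x)"
    by (simp add: evk_def pR_def map_of_real_pCons)
  also have "(cmod w)^2 = (Re w)^2 + (Im w)^2" by (simp add: cmod_power2)
  finally show ?thesis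
    by (simp add: power2_eq_square algebra_simps)
qed

lemma poly_pR_complex: "poly (map_poly complex_of_real (pR w)) z = (z - w) * (z - cnj w)"
proof -
  have "poly (map_poly complex_of_real (pR w)) z = of_real ((cmod w)^2) + z * (of_real (-2 * Re w) + z)"
    by (simp add: pR_def map_of_real_pCons)
  also have "complex_of_real ((cmod w)^2) = w * cnj w" by (simp add: complex_mult_cnj cmod_power2)
  also have "complex_of_real (-2 * Re w) = - (w + cnj w)" by (simp add: complex_add_cnj)
  finally show ?thesis by (simp add: algebra_simps)
qed

lemma poly_pR_real: "poly (pR w) t = (t - Re w)^2 + (Im w)^2"
proof -
  have h: "(cmod w)^2 = (Re w)^2 + (Im w)^2" by (simp add: cmod_power2)
  show ?thesis by (simp add: pR_def h) (simp add: algebra_simps power2_eq_square)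
qed

lemma pR_nz: "pR w \<noteq> 0" by (simp add: pR_def)
lemma degree_pR: "degree (pR w) = 2" by (simp add: pR_def)
lemma lead_pR: "lead_coeff (pR w) = 1" by (simp add: pR_def)

lemma pR_dvd:
  assumes z: "Im z \<noteq> 0" and r: "poly (map_poly complex_of_real Q) z = 0"
  shows "Q = pR z * (Q div pR z)"
proof -
  define r where "r = Q mod pR z"
  have eq: "Q = pR z * (Q div pR z) + r" unfolding r_def by (simp add: div_mult_mod_eq)
  have dr: "r = 0 \<or> degree r < 2" using degree_mod_less[OF pR_nz, of Q z] by (simp add: r_def degree_pR)
  have rr: "r = [:coeff r 0, coeff r 1:]"
  proof (intro poly_eqI)
    fix n show "coeff r n = coeff [:coeff r 0, coeff r 1:] n"
      using dr by (cases n) (auto simp: coeff_pCons coeff_eq_0 split: nat.splits)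
  qed
  have "poly (map_poly complex_of_real Q) z = poly (map_poly complex_of_real (pR z)) z * poly (map_poly complex_of_real (Q div pR z)) z + poly (map_poly complex_of_real r) z"
    by (subst eq) (simp add: map_of_real_add map_of_real_mult)
  then have "poly (map_poly complex_of_real r) z = 0" using r by (simp add: poly_pR_complex)
  then have "complex_of_real (coeff r 0) + z * complex_of_real (coeff r 1) = 0"
    by (subst (asm) rr) (simp add: map_of_real_pCons)
  then have "Re (complex_of_real (coeff r 0) + z * complex_of_real (coeff r 1)) = 0"
    and "Im (complex_of_real (coeff r 0) + z * complex_of_real (coeff r 1)) = 0" by simp_all
  then have "coeff r 1 = 0" "coeff r 0 = 0" using z by auto
  then have "r = 0" using rr by simp
  then show ?thesis using eq by simp
qed

lemma monic_bound:
  fixes x :: "'k::real_normed_field"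
  assumes mu: "\<And>w. norm (evk (pR w) x) \<ge> \<mu>" and mu0: "\<mu> \<ge> 0"
  shows "lead_coeff Q = 1 \<Longrightarrow> (\<forall>t. poly Q t \<noteq> 0) \<Longrightarrow> norm (evk Q x) \<ge> \<mu> ^ (degree Q div 2)"
proof (induction "degree Q" arbitrary: Q rule: less_induct)
  case less
  show ?case
  proof (cases "degree Q = 0")
    case True
    then have "Q = [:1:]" using less.prems(1) by (metis degree_0_id)
    then show ?thesis by (simp add: evk_const True)
  next
    case False
    have "degree (map_poly complex_of_real Q) = degree Q" by (simp add: degree_map_poly)
    then have "\<not> constant (poly (map_poly complex_of_real Q))" using False by (simp add: constant_degree)
    then obtain z where z: "poly (map_poly complex_of_real Q) z = 0" using fundamental_theorem_of_algebra by blast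
    have imz: "Im z \<noteq> 0"
    proof
      assume "Im z = 0"
      then have "z = complex_of_real (Re z)" by (simp add: complex_eq_iff)
      then have "poly (map_poly complex_of_real Q) (complex_of_real (Re z)) = 0" using z by simp
      moreover have "poly (map_poly complex_of_real Q) (complex_of_real (Re z)) = complex_of_real (poly Q (Re z))"
        by (induction Q rule: pCons_induct) (simp_all add: map_of_real_pCons)
      ultimately show False using less.prems(2) by simp
    qed
    define q where "q = Q div pR z"
    have Qe: "Q = pR z * q" using pR_dvd[OF imz z] by (simp add: q_def)
    have qnz: "q \<noteq> 0" using Qe less.prems(1) by auto
    have dq: "degree Q = 2 + degree q" using Qe qnz by (simp add: degree_mult_eq pR_nz degree_pR)
    have lq: "lead_coeff q = 1" using less.prems(1) Qe by (simp add: lead_coeff_mult lead_pR)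
    have rq: "\<forall>t. poly q t \<noteq> 0"
    proof
      fix t show "poly q t \<noteq> 0" using less.prems(2) Qe by (metis mult_zero_right poly_mult)
    qed
    have IH: "norm (evk q x) \<ge> \<mu> ^ (degree q div 2)"
      using less.hyps[of q] dq lq rq by simp
    have "norm (evk Q x) = norm (evk (pR z) x) * norm (evk q x)"
      by (simp add: Qe evk_mult norm_mult)
    also have "\<dots> \<ge> \<mu> * \<mu> ^ (degree q div 2)"
      using IH mu[of z] mu0 by (intro mult_mono) auto
    finally show ?thesis using dq by simp
  qed
qed

lemma poly_of_real_real: "poly (map_poly complex_of_real Q) (complex_of_real t) = complex_of_real (poly Q t)"
  by (induction Q rule: pCons_induct) (simp_all add: map_of_real_pCons)

lemma step_bound:
  fixes x :: "'k::real_normed_field"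
  assumes mu: "\<And>w. norm (evk (pR w) x) \<ge> \<mu>" and mu0: "\<mu> > 0"
    and fz: "norm (evk (pR z) x) = \<mu>" and eps: "0 < \<epsilon>" "\<epsilon> < \<mu>"
  shows "norm (evk (pR (Complex (Re z) (sqrt ((Im z)^2 + \<epsilon>)))) x) = \<mu>"
proof -
  define s where "s = sqrt ((Im z)^2 + \<epsilon>)"
  define \<zeta> where "\<zeta> = Complex (Re z) s"
  have s0: "s > 0" unfolding s_def using eps by (intro real_sqrt_gt_zero) (auto intro: add_nonneg_pos)
  have s2: "s^2 = (Im z)^2 + \<epsilon>" unfolding s_def using eps by (simp add: add_nonneg_nonneg)
  have Rz: "(\<zeta> - z) * (\<zeta> - cnj z) = - complex_of_real \<epsilon>"
  proof -
    have "(\<zeta> - z) * (\<zeta> - cnj z) = complex_of_real (Im z ^2 - s^2)"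
      by (simp add: \<zeta>_def complex_eq_iff power2_eq_square algebra_simps)
    then show ?thesis by (simp add: s2)
  qed
  have bound: "norm (evk (pR \<zeta>) x) \<le> \<mu> + \<epsilon> * (\<epsilon>/\<mu>)^(2*N)" for N :: nat
  proof -
    define n where "n = Suc (2*N)"
    have nodd: "odd n" by (simp add: n_def)
    define h where "h = (pR z)^n + [:\<epsilon>^n:]"
    have hz: "poly (map_poly complex_of_real h) \<zeta> = 0"
    proof -
      have "poly (map_poly complex_of_real h) \<zeta> = ((\<zeta> - z) * (\<zeta> - cnj z))^n + complex_of_real (\<epsilon>^n)"
        using evk_power[of "pR z" n \<zeta>] poly_pR_complex[of z \<zeta>] evk_add[of "(pR z)^n" "[:\<epsilon>^n:]" \<zeta>]
          evk_const[of "\<epsilon>^n" \<zeta>]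
        by (simp add: h_def evk_def)
      also have "\<dots> = 0" using nodd by (simp add: Rz)
      finally show ?thesis .
    qed
    have imz: "Im \<zeta> \<noteq> 0" using s0 by (simp add: \<zeta>_def)
    define Q where "Q = h div pR \<zeta>"
    have hQ: "h = pR \<zeta> * Q" using pR_dvd[OF imz hz] by (simp add: Q_def)
    have dp: "degree ((pR z)^n) = 2*n" by (simp add: degree_power_eq pR_nz degree_pR)
    have lp: "lead_coeff ((pR z)^n) = 1" by (simp add: lead_coeff_power lead_pR)
    have n0: "n > 0" by (simp add: n_def)
    have dh: "degree h = 2 * n"
      unfolding h_def using dp n0 by (subst degree_add_eq_left) simp_all
    have lh: "lead_coeff h = 1"
      unfolding h_def using dp n0 lp lead_coeff_add_le[of "[:\<epsilon>^n:]" "(pR z)^n"] by (simp add: add.commute)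
    have Qnz: "Q \<noteq> 0" using hQ lh by auto
    have dQ: "degree Q = 2 * (2 * N)" using hQ dh Qnz by (simp add: degree_mult_eq pR_nz degree_pR n_def)
    have lQ: "lead_coeff Q = 1" using hQ lh by (simp add: lead_coeff_mult lead_pR)
    have hpos: "poly h t > 0" for t
    proof -
      have "poly (pR z) t \<ge> 0" by (simp add: poly_pR_real)
      then show ?thesis using eps by (simp add: h_def add_nonneg_pos)
    qed
    have rQ: "\<forall>t. poly Q t \<noteq> 0"
      using hpos hQ by (metis less_irrefl mult_zero_right poly_mult)
    have lowQ: "norm (evk Q x) \<ge> \<mu> ^ (2*N)"
      using monic_bound[OF mu, of Q] mu0 lQ rQ dQ by simp
    have up: "norm (evk h x) \<le> \<mu>^n + \<epsilon>^n"
    proof -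
      have "evk h x = evk (pR z) x ^ n + of_real (\<epsilon>^n)" by (simp add: h_def evk_add evk_power evk_const)
      then have "norm (evk h x) \<le> norm (evk (pR z) x ^ n) + norm (of_real (\<epsilon>^n) :: 'k)"
        by (simp add: norm_triangle_ineq)
      then show ?thesis using eps by (simp add: norm_power fz)
    qed
    have "norm (evk h x) = norm (evk (pR \<zeta>) x) * norm (evk Q x)" by (simp add: hQ evk_mult norm_mult)
    then have "norm (evk (pR \<zeta>) x) * \<mu>^(2*N) \<le> \<mu>^n + \<epsilon>^n"
      using up lowQ by (metis dual_order.trans mult_left_mono norm_ge_zero)
    then have "norm (evk (pR \<zeta>) x) \<le> (\<mu>^n + \<epsilon>^n) / \<mu>^(2*N)"
      using mu0 by (simp add: pos_le_divide_eq)
    also have "(\<mu>^n + \<epsilon>^n) / \<mu>^(2*N) = \<mu> + \<epsilon> * (\<epsilon>/\<mu>)^(2*N)"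
      using mu0 by (simp add: n_def field_simps power_add power_divide)
    finally show ?thesis .
  qed
  have "norm (evk (pR \<zeta>) x) \<le> \<mu>"
  proof (rule ccontr)
    assume "\<not> ?thesis"
    then have d: "norm (evk (pR \<zeta>) x) - \<mu> > 0" by simp
    obtain N where N: "(\<epsilon>/\<mu>)^N < (norm (evk (pR \<zeta>) x) - \<mu>) / \<epsilon>"
      using real_arch_pow_inv[of "(norm (evk (pR \<zeta>) x) - \<mu>) / \<epsilon>" "\<epsilon>/\<mu>"] d eps by auto
    have p: "(\<epsilon>/\<mu>)^(2*N) \<le> (\<epsilon>/\<mu>)^N"
      using eps mu0 by (intro power_decreasing) auto
    have "\<epsilon> * (\<epsilon>/\<mu>)^N < norm (evk (pR \<zeta>) x) - \<mu>"
      using N eps by (simp add: pos_less_divide_eq mult.commute)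
    moreover have "\<epsilon> * (\<epsilon>/\<mu>)^(2*N) \<le> \<epsilon> * (\<epsilon>/\<mu>)^N"
      using p eps by (intro mult_left_mono) auto
    ultimately have "\<epsilon> * (\<epsilon>/\<mu>)^(2*N) < norm (evk (pR \<zeta>) x) - \<mu>" by linarith
    then show False using bound[of N] by simp
  qed
  then show ?thesis using mu[of \<zeta>] by (simp add: \<zeta>_def s_def)
qed

lemma evk_pR_alt: "evk (pR w) (x::'k::real_normed_field) = of_real ((cmod w)^2) + of_real (-2 * Re w) * x + x * x"
  by (simp add: evk_def pR_def map_of_real_pCons algebra_simps)

lemma evk_pR_lower: "norm (evk (pR w) (x::'k::real_normed_field)) \<ge> (cmod w)^2 - 2 * cmod w * norm x - (norm x)^2"
proof -
  have "norm (of_real (-2 * Re w) * x + x * x) \<le> 2 * cmod w * norm x + (norm x)^2"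
  proof -
    have "norm (of_real (-2 * Re w) * x + x * x) \<le> norm (of_real (-2 * Re w) * x) + norm (x * x)"
      by (rule norm_triangle_ineq)
    also have "norm (of_real (-2 * Re w) * x) = 2 * \<bar>Re w\<bar> * norm x" by (simp add: norm_mult)
    also have "2 * \<bar>Re w\<bar> * norm x \<le> 2 * cmod w * norm x" by (simp add: abs_Re_le_cmod mult_right_mono)
    finally show ?thesis by (simp add: norm_mult power2_eq_square)
  qed
  moreover have "norm (evk (pR w) x) \<ge> norm (of_real ((cmod w)^2) :: 'k) - norm (of_real (-2 * Re w) * x + x * x)"
  proof -
    have e: "evk (pR w) x = of_real ((cmod w)^2) + (of_real (-2 * Re w) * x + x * x)"
      by (simp only: evk_pR_alt add.assoc)
    show ?thesis unfolding e by (rule norm_diff_ineq)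
  qed
  moreover have "norm (of_real ((cmod w)^2) :: 'k) = (cmod w)^2" by (simp only: norm_of_real) simp
  ultimately show ?thesis by linarith
qed

lemma quadratic_exists: "\<exists>w. evk (pR w) (x::'k::real_normed_field) = 0"
proof (rule ccontr)
  assume nz: "\<nexists>w. evk (pR w) x = 0"
  define f where "f w = norm (evk (pR w) x)" for w
  define a where "a = norm x"
  define R where "R = 3 * a + 1"
  have a0: "a \<ge> 0" by (simp add: a_def)
  have f0: "f 0 = a^2" by (simp add: f_def evk_pR_alt a_def norm_mult power2_eq_square)
  have far: "f w > a^2" if "cmod w > R" for w
  proof -
    have "f w \<ge> (cmod w)^2 - 2 * cmod w * a - a^2" using evk_pR_lower[of w x] by (simp add: f_def a_def)
    moreover have "(cmod w)^2 - 2 * cmod w * a - a^2 > a^2"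
    proof -
      have "cmod w * (cmod w - 2 * a) > R * (R - 2*a)"
        using that a0 by (intro mult_strict_mono) (auto simp: R_def)
      moreover have "R * (R - 2*a) = 3*(a*a) + 4*a + 1" by (simp add: R_def algebra_simps)
      moreover have "cmod w * (cmod w - 2*a) = cmod w * cmod w - 2*(a*cmod w)" by (simp add: algebra_simps)
      moreover have "(cmod w)^2 = cmod w * cmod w" "a^2 = a*a" by (simp_all add: power2_eq_square)
      moreover have "a*a \<ge> 0" using a0 by simp
      moreover have "2*cmod w*a = 2*(a*cmod w)" by simp
      ultimately show ?thesis using a0 by linarith
    qed
    ultimately show ?thesis by simp
  qed
  have cont: "continuous_on UNIV f"
    unfolding f_def evk_pR_alt by (intro continuous_intros)
  obtain w0 where w0: "w0 \<in> cball 0 R" "\<forall>y\<in>cball 0 R. f w0 \<le> f y"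
    using continuous_attains_inf[of "cball 0 R" f, OF compact_cball _ continuous_on_subset[OF cont subset_UNIV]] a0
    by (auto simp: R_def)
  have gmin: "f w0 \<le> f y" for y
  proof (cases "cmod y \<le> R")
    case True then show ?thesis using w0 by auto
  next
    case False
    have "f w0 \<le> f 0" using w0 a0 by (auto simp: R_def)
    then show ?thesis using far[of y] False f0 by simp
  qed
  define \<mu> where "\<mu> = f w0"
  have mu0: "\<mu> > 0" using nz by (simp add: \<mu>_def f_def)
  have mu: "\<And>w. norm (evk (pR w) x) \<ge> \<mu>" using gmin by (simp add: \<mu>_def f_def)
  define \<epsilon> where "\<epsilon> = \<mu> / 2"
  have eps: "0 < \<epsilon>" "\<epsilon> < \<mu>" using mu0 by (simp_all add: \<epsilon>_def)
  define zt where "zt z = Complex (Re z) (sqrt ((Im z)^2 + \<epsilon>))" for z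
  have it: "f ((zt ^^ k) w0) = \<mu> \<and> (cmod ((zt ^^ k) w0))^2 \<ge> k * \<epsilon>" for k
  proof (induction k)
    case 0 then show ?case by (simp add: \<mu>_def)
  next
    case (Suc k)
    define z where "z = (zt ^^ k) w0"
    have fz: "f z = \<mu>" and cz: "(cmod z)^2 \<ge> k * \<epsilon>" using Suc by (simp_all add: z_def)
    have "f (zt z) = \<mu>"
      using step_bound[OF mu mu0 _ eps, of z] fz by (simp add: f_def zt_def)
    moreover have "(cmod (zt z))^2 = (cmod z)^2 + \<epsilon>"
      using eps by (simp add: zt_def cmod_power2 add_nonneg_nonneg)
    ultimately show ?case using cz by (simp add: z_def algebra_simps)
  qed
  obtain k :: nat where k: "k > R^2 / \<epsilon>" using reals_Archimedean2 by blast
  define z where "z = (zt ^^ k) w0"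
  have "(cmod z)^2 > R^2" using it[of k] k eps by (simp add: z_def pos_divide_less_eq)
  then have "cmod z > R" using a0 power2_less_imp_less[of R "cmod z"] by simp
  then have "f z > a^2" by (rule far)
  moreover have "f z = \<mu>" using it by (simp add: z_def)
  moreover have "\<mu> \<le> a^2" using gmin[of 0] f0 by (simp add: \<mu>_def)
  ultimately show False by simp
qed

lemma field_repr: "\<exists>j::'k::real_normed_field. (j * j = -1 \<or> j = 0) \<and> (\<forall>x. \<exists>u v. x = of_real u + of_real v * j)"
proof -
  have rep: "\<exists>u v. x = of_real u + of_real v * j" if j: "j * j = -1 \<or> j = 0" and nj: "j = 0 \<Longrightarrow> \<not>(\<exists>y::'k. y*y = -1)" for x j :: 'k
  proof -
    obtain w where w: "evk (pR w) x = 0" using quadratic_exists by blast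
    then have e: "(x - of_real (Re w))^2 + of_real ((Im w)^2) = 0" by (simp add: evk_pR)
    show ?thesis
    proof (cases "Im w = 0")
      case True
      then have "x = of_real (Re w)" using e by simp
      then show ?thesis by (intro exI[of _ "Re w"] exI[of _ 0]) simp
    next
      case False
      define y where "y = (x - of_real (Re w)) / of_real (Im w)"
      have "y * y = -1"
      proof -
        have "(x - of_real (Re w))^2 = - of_real ((Im w)^2)" using e by (simp add: eq_neg_iff_add_eq_0)
        then show ?thesis using False
          by (simp add: y_def power2_eq_square field_simps)
      qed
      then have jj: "j * j = -1" using j nj by auto
      have "(y - j) * (y + j) = 0" using \<open>y * y = -1\<close> jj by (simp add: algebra_simps)
      then have "y = j \<or> y = -j" by (auto simp: eq_neg_iff_add_eq_0)
      moreover have "x = of_real (Re w) + of_real (Im w) * y" using False by (simp add: y_def)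
      ultimately show ?thesis
      proof (elim disjE)
        assume "y = j" then show ?thesis using \<open>x = _\<close> by blast
      next
        assume "y = -j"
        then have "x = of_real (Re w) + of_real (- Im w) * j" using \<open>x = _\<close> by simp
        then show ?thesis by blast
      qed
    qed
  qed
  show ?thesis
  proof (cases "\<exists>y::'k. y*y = -1")
    case True
    then obtain j :: 'k where jj: "j * j = -1" by blast
    have "\<forall>x. \<exists>u v. x = of_real u + of_real v * j"
    proof
      fix x show "\<exists>u v. x = of_real u + of_real v * j" by (rule rep) (use jj in auto)
    qed
    then show ?thesis using jj by blast
  next
    case False
    have "\<forall>x. \<exists>u v. x = of_real u + of_real v * (0::'k)"
    proof
      fix x show "\<exists>u v. x = of_real u + of_real v * (0::'k)" by (rule rep) (use False in auto)
    qed
    then show ?thesis by blast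
  qed
qed

lemma norm_sqrt_m1: "(j::'k::real_normed_field) * j = -1 \<Longrightarrow> norm j = 1"
proof -
  assume jj: "j * j = -1"
  have "norm (j * j) = 1" using jj by simp
  then have "norm j * norm j = 1" by (simp add: norm_mult)
  moreover have "norm j = sqrt (norm j * norm j)" by simp
  ultimately show ?thesis by simp
qed

lemma sq_bound:
  assumes jj: "(j::'k::real_normed_field) * j = -1"
  shows "u^2 + v^2 \<le> norm (of_real u + of_real v * j) * (\<bar>u\<bar> + \<bar>v\<bar>)"
proof -
  have prod0: "(of_real u + of_real v * j) * (of_real u - of_real v * j) = of_real u * of_real u - of_real v * of_real v * (j * j)"
    by (simp add: algebra_simps)
  have prod: "(of_real u + of_real v * j) * (of_real u - of_real v * j) = (of_real (u^2 + v^2) :: 'k)"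
    unfolding prod0 jj by (simp add: power2_eq_square)
  have nr: "norm (of_real (u^2 + v^2) :: 'k) = u^2 + v^2"
    by (simp only: norm_of_real) (simp add: add_nonneg_nonneg)
  have "u^2 + v^2 = norm (of_real u + of_real v * j) * norm (of_real u - of_real v * j :: 'k)"
    using arg_cong[OF prod, of norm] unfolding nr norm_mult by simp
  also have "norm (of_real u - of_real v * j :: 'k) \<le> \<bar>u\<bar> + \<bar>v\<bar>"
  proof -
    have "norm (of_real u - of_real v * j :: 'k) \<le> norm (of_real u :: 'k) + norm (of_real v * j)"
      by (rule norm_triangle_ineq4)
    then show ?thesis by (simp add: norm_mult norm_sqrt_m1[OF jj])
  qed
  finally show ?thesis by (simp add: mult_left_mono)
qed

lemma compact_cball_field: "compact (cball (0::'k::real_normed_field) r)"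
proof -
  obtain j :: 'k where j: "j * j = -1 \<or> j = 0" and rep: "\<And>x. \<exists>u v. x = of_real u + of_real v * j"
    using field_repr by blast
  define L where "L z = of_real (Re z) + of_real (Im z) * j" for z
  have cL: "continuous_on UNIV L" unfolding L_def by (intro continuous_intros)
  have sub: "x \<in> L ` cball 0 (2 * r)" if x: "x \<in> cball 0 r" for x
  proof -
    have nx: "norm x \<le> r" using x by simp
    have r0: "0 \<le> r" using nx norm_ge_zero[of x] by linarith
    obtain u0 v0 where uv0: "x = of_real u0 + of_real v0 * j" using rep by blast
    define u where "u = u0"
    define v where "v = (if j = 0 then 0 else v0)"
    have uv: "x = of_real u + of_real v * j" using uv0 by (simp add: u_def v_def)
    have vj: "j = 0 \<Longrightarrow> v = 0" by (simp add: v_def)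
    define z where "z = Complex u v"
    have xz: "x = L z" by (simp add: L_def z_def uv)
    have "cmod z \<le> 2 * r"
    proof (cases "j = 0")
      case True
      then have "x = of_real u" using uv by simp
      then have "\<bar>u\<bar> \<le> r" using nx by simp
      moreover have "cmod z = \<bar>u\<bar>" using vj True by (simp add: z_def cmod_def)
      ultimately show ?thesis using r0 by simp
    next
      case False
      then have jj: "j * j = -1" using j by simp
      have "u^2 + v^2 \<le> r * (2 * cmod z)"
      proof -
        have "u^2 + v^2 \<le> norm x * (\<bar>u\<bar> + \<bar>v\<bar>)" using sq_bound[OF jj, of u v] uv by simp
        also have "\<dots> \<le> r * (2 * cmod z)"
        proof (rule mult_mono)
          have "\<bar>u\<bar> \<le> cmod z" "\<bar>v\<bar> \<le> cmod z" using abs_Re_le_cmod[of z] abs_Im_le_cmod[of z] by (simp_all add: z_def)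
          then show "\<bar>u\<bar> + \<bar>v\<bar> \<le> 2 * cmod z" by simp
        qed (use nx r0 in auto)
        finally show ?thesis .
      qed
      moreover have "(cmod z)^2 = u^2 + v^2" unfolding z_def cmod_power2 by simp
      ultimately have c2: "(cmod z)^2 \<le> 2 * r * cmod z" by (simp add: mult.assoc)
      show ?thesis
      proof (cases "cmod z = 0")
        case True then show ?thesis using r0 by simp
      next
        case False
        then have "cmod z * cmod z \<le> (2 * r) * cmod z" using c2 by (simp add: power2_eq_square)
        moreover have "cmod z > 0" using False norm_ge_zero[of z] by linarith
        ultimately show ?thesis using mult_right_le_imp_le[of "cmod z" "cmod z" "2 * r"] by blast
      qed
    qed
    then show ?thesis using xz by (intro image_eqI[of _ L z]) auto
  qed
  have "compact (L ` cball 0 (2 * r))"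
    by (intro compact_continuous_image continuous_on_subset[OF cL]) auto
  then have "compact (L ` cball 0 (2 * r) \<inter> cball 0 r)" by (intro compact_Int_closed) auto
  moreover have "L ` cball 0 (2 * r) \<inter> cball 0 r = cball 0 r" using sub by blast
  ultimately show ?thesis by simp
qed



lemma gen_nbhd:
  "generate_topology_on B U \<Longrightarrow> \<forall>x\<in>U. \<exists>F. finite F \<and> F \<subseteq> B \<and> x \<in> \<Inter>F \<and> \<Inter>F \<subseteq> U"
proof (induction rule: generate_topology_on.induct)
  case Empty then show ?case by simp
next
  case (Int a b)
  show ?case
  proof
    fix x assume x: "x \<in> a \<inter> b"
    obtain F1 where F1: "finite F1" "F1 \<subseteq> B" "x \<in> \<Inter>F1" "\<Inter>F1 \<subseteq> a"
      using Int.IH(1) x by (meson IntD1)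
    obtain F2 where F2: "finite F2" "F2 \<subseteq> B" "x \<in> \<Inter>F2" "\<Inter>F2 \<subseteq> b"
      using Int.IH(2) x by (meson IntD2)
    have "\<Inter>(F1 \<union> F2) \<subseteq> a \<inter> b" using F1(4) F2(4) by auto
    then show "\<exists>F. finite F \<and> F \<subseteq> B \<and> x \<in> \<Inter>F \<and> \<Inter>F \<subseteq> a \<inter> b"
      using F1 F2 by (intro exI[of _ "F1 \<union> F2"]) blast
  qed
next
  case (UN K)
  show ?case
  proof
    fix x assume "x \<in> \<Union>K"
    then obtain k where k: "k \<in> K" "x \<in> k" by blast
    obtain F where F: "finite F" "F \<subseteq> B" "x \<in> \<Inter>F" "\<Inter>F \<subseteq> k" using UN.IH k by meson
    have "\<Inter>F \<subseteq> \<Union>K" using F(4) k by blast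
    then show "\<exists>F. finite F \<and> F \<subseteq> B \<and> x \<in> \<Inter>F \<and> \<Inter>F \<subseteq> \<Union>K" using F by blast
  qed
next
  case (Basis s)
  then show ?case by (intro ballI exI[of _ "{s}"]) simp
qed

lemma sn_combine:
  fixes q :: "'i \<Rightarrow> 'v::ab_group_add \<Rightarrow> real"
  assumes dir: "sn_directed S q" and g: "g \<in> S"
    and sub: "\<And>a b. a \<in> S \<Longrightarrow> b \<in> S \<Longrightarrow> a - b \<in> S"
  shows "finite F \<Longrightarrow> (\<forall>b\<in>F. \<exists>i \<delta>. \<delta> > 0 \<and> (\<forall>y\<in>S. q i (y - g) < \<delta> \<longrightarrow> y \<in> b))
    \<Longrightarrow> \<exists>i \<delta>. \<delta> > 0 \<and> (\<forall>y\<in>S. q i (y - g) < \<delta> \<longrightarrow> y \<in> \<Inter>F)"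
proof (induction F rule: finite_induct)
  case empty
  show ?case by (intro exI[of _ undefined] exI[of _ 1]) simp
next
  case (insert b F)
  obtain i1 \<delta>1 where 1: "\<delta>1 > 0" "\<forall>y\<in>S. q i1 (y - g) < \<delta>1 \<longrightarrow> y \<in> b" using insert.prems by auto
  obtain i2 \<delta>2 where 2: "\<delta>2 > 0" "\<forall>y\<in>S. q i2 (y - g) < \<delta>2 \<longrightarrow> y \<in> \<Inter>F" using insert.IH insert.prems by auto
  obtain i3 C where C: "C > 0" "\<forall>f\<in>S. max (q i1 f) (q i2 f) \<le> C * q i3 f"
    using dir unfolding sn_directed_def by blast
  define \<delta> where "\<delta> = min \<delta>1 \<delta>2 / C"
  have d0: "\<delta> > 0" using 1 2 C by (simp add: \<delta>_def)
  have "\<forall>y\<in>S. q i3 (y - g) < \<delta> \<longrightarrow> y \<in> \<Inter>(insert b F)"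
  proof (intro ballI impI)
    fix y assume y: "y \<in> S" "q i3 (y - g) < \<delta>"
    have yg: "y - g \<in> S" using sub y g by blast
    have "C * q i3 (y - g) < min \<delta>1 \<delta>2" using y C by (simp add: \<delta>_def pos_less_divide_eq mult.commute)
    then have "max (q i1 (y - g)) (q i2 (y - g)) < min \<delta>1 \<delta>2" using C yg by fastforce
    then show "y \<in> \<Inter>(insert b F)" using 1 2 y by auto
  qed
  then show ?case using d0 by blast
qed

lemma sn_nbhd:
  fixes q :: "'i \<Rightarrow> 'v::ab_group_add \<Rightarrow> real"
  assumes sub: "\<And>a b. a \<in> S \<Longrightarrow> b \<in> S \<Longrightarrow> a - b \<in> S"
    and tri: "\<And>i a b. a \<in> S \<Longrightarrow> b \<in> S \<Longrightarrow> q i (a + b) \<le> q i a + q i b"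
    and dir: "sn_directed S q"
    and U: "openin (sn_top S q) U" and g: "g \<in> U"
  shows "\<exists>i \<delta>. \<delta> > 0 \<and> (\<forall>y\<in>S. q i (y - g) < \<delta> \<longrightarrow> y \<in> U)"
proof -
  define B where "B = {{y. q i (y - x) < e} | i x e. x \<in> S \<and> e > 0}"
  have "openin (subtopology (topology_generated_by B) S) U" using U by (simp add: sn_top_def B_def)
  then obtain T where T0: "openin (topology_generated_by B) T" and T: "U = T \<inter> S"
    by (auto simp: openin_subtopology)
  have TB: "generate_topology_on B T" using T0 by (simp add: openin_topology_generated_by_iff)
  have gS: "g \<in> S" "g \<in> T" using g T by auto
  obtain F where F: "finite F" "F \<subseteq> B" "g \<in> \<Inter>F" "\<Inter>F \<subseteq> T" using gen_nbhd[OF TB] gS(2) by meson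
  have bl: "\<forall>b\<in>F. \<exists>i \<delta>. \<delta> > 0 \<and> (\<forall>y\<in>S. q i (y - g) < \<delta> \<longrightarrow> y \<in> b)"
  proof
    fix b assume b: "b \<in> F"
    then have "b \<in> B" using F(2) by blast
    then have "\<exists>i x e. b = {y. q i (y - x) < e} \<and> x \<in> S \<and> e > 0" by (simp add: B_def)
    then obtain i x e where bx: "b = {y. q i (y - x) < e}" "x \<in> S" "e > 0" by blast
    have gb: "q i (g - x) < e" using F(3) b bx(1) by auto
    show "\<exists>i \<delta>. \<delta> > 0 \<and> (\<forall>y\<in>S. q i (y - g) < \<delta> \<longrightarrow> y \<in> b)"
    proof (intro exI conjI ballI impI)
      show "e - q i (g - x) > 0" using gb by simp
      fix y assume y: "y \<in> S" "q i (y - g) < e - q i (g - x)"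
      have "q i (y - x) = q i ((y - g) + (g - x))" by simp
      also have "\<dots> \<le> q i (y - g) + q i (g - x)"
        by (rule tri) (use sub y(1) gS(1) bx(2) in auto)
      finally show "y \<in> b" using y bx(1) by simp
    qed
  qed
  have "\<exists>i \<delta>. \<delta> > 0 \<and> (\<forall>y\<in>S. q i (y - g) < \<delta> \<longrightarrow> y \<in> \<Inter>F)"
    using sn_combine[of S q g F, OF dir gS(1) sub F(1) bl] by simp
  then obtain i \<delta> where d: "\<delta> > 0" "\<forall>y\<in>S. q i (y - g) < \<delta> \<longrightarrow> y \<in> \<Inter>F"
    by blast
  have "\<forall>y\<in>S. q i (y - g) < \<delta> \<longrightarrow> y \<in> U"
  proof (intro ballI impI)
    fix y assume "y \<in> S" "q i (y - g) < \<delta>"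
    then have "y \<in> \<Inter>F" using d by blast
    then show "y \<in> U" using F(4) T \<open>y \<in> S\<close> by blast
  qed
  then show ?thesis using d(1) by blast
qed

lemma sn_ball_open:
  fixes q :: "'i \<Rightarrow> 'v::ab_group_add \<Rightarrow> real"
  assumes "x \<in> S" "e > 0"
  shows "openin (sn_top S q) {y \<in> S. q i (y - x) < e}"
proof -
  have "openin (topology_generated_by {{y. q i (y - x) < e} | i x e. x \<in> S \<and> e > 0}) {y. q i (y - x) < e}"
    using assms by (intro topology_generated_by_Basis) blast
  then show ?thesis unfolding sn_top_def openin_subtopology by blast
qed

lemma sn_topspace:
  fixes q :: "'i \<Rightarrow> 'v::ab_group_add \<Rightarrow> real"
  assumes "\<And>i. q i 0 = 0"
  shows "topspace (sn_top S q) = S"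
proof -
  have "S \<subseteq> \<Union>{{y. q i (y - x) < e} | i x e. x \<in> S \<and> e > 0}"
  proof
    fix x assume "x \<in> S"
    then have "{y. q undefined (y - x) < 1} \<in> {{y. q i (y - x) < e} | i x e. x \<in> S \<and> e > 0}"
      unfolding mem_Collect_eq by (intro exI[of _ undefined] exI[of _ x] exI[of _ "1::real"]) simp
    moreover have "x \<in> {y. q undefined (y - x) < 1}" using assms by simp
    ultimately show "x \<in> \<Union>{{y. q i (y - x) < e} | i x e. x \<in> S \<and> e > 0}" by blast
  qed
  then show ?thesis unfolding sn_top_def by auto
qed

lemma sn_hausdorff_space:
  fixes q :: "'i \<Rightarrow> 'v::ab_group_add \<Rightarrow> real"
  assumes sub: "\<And>a b. a \<in> S \<Longrightarrow> b \<in> S \<Longrightarrow> a - b \<in> S"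
    and tri: "\<And>i a b. a \<in> S \<Longrightarrow> b \<in> S \<Longrightarrow> q i (a + b) \<le> q i a + q i b"
    and sym: "\<And>i a. a \<in> S \<Longrightarrow> q i (- a) = q i a"
    and nn: "\<And>i a. a \<in> S \<Longrightarrow> q i a \<ge> 0"
    and z: "\<And>i. q i 0 = 0"
    and H: "sn_hausdorff S q"
  shows "Hausdorff_space (sn_top S q)"
  unfolding Hausdorff_space_def
proof (intro allI impI, elim conjE)
  fix g h assume g: "g \<in> topspace (sn_top S q)" and h: "h \<in> topspace (sn_top S q)" and gh: "g \<noteq> h"
  have gS: "g \<in> S" "h \<in> S" using g h sn_topspace[of q S, OF z] by auto
  have d: "g - h \<in> S" "g - h \<noteq> 0" using sub gS gh by auto
  then obtain i where i: "q i (g - h) \<noteq> 0" using H unfolding sn_hausdorff_def by blast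
  define d where "d = q i (g - h)"
  have d0: "d > 0" using i nn[OF d(1), of i] by (simp add: d_def)
  define U where "U = {y \<in> S. q i (y - g) < d/2}"
  define V where "V = {y \<in> S. q i (y - h) < d/2}"
  have "openin (sn_top S q) U" unfolding U_def by (rule sn_ball_open) (use gS d0 in auto)
  moreover have "openin (sn_top S q) V" unfolding V_def by (rule sn_ball_open) (use gS d0 in auto)
  moreover have "g \<in> U" "h \<in> V" using gS d0 z by (auto simp: U_def V_def)
  moreover have "disjnt U V"
  proof -
    have False if y: "y \<in> U" "y \<in> V" for y
    proof -
      have yS: "y \<in> S" using y by (simp add: U_def)
      have "d = q i ((- (y - g)) + (y - h))" by (simp add: d_def)
      also have "\<dots> \<le> q i (- (y - g)) + q i (y - h)"
        using tri sub yS gS by (metis minus_diff_eq)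
      also have "q i (- (y - g)) = q i (y - g)" using sym sub yS gS by blast
      finally show False using y by (simp add: U_def V_def)
    qed
    then show ?thesis unfolding disjnt_def by blast
  qed
  ultimately show "\<exists>U V. openin (sn_top S q) U \<and> openin (sn_top S q) V \<and> g \<in> U \<and> h \<in> V \<and> disjnt U V"
    by blast
qed

lemma continuous_map_generated:
  assumes ts: "\<And>x. x \<in> topspace X \<Longrightarrow> f x \<in> \<Union>B"
    and op: "\<And>b. b \<in> B \<Longrightarrow> openin X {x \<in> topspace X. f x \<in> b}"
  shows "continuous_map X (topology_generated_by B) f"
proof -
  have "generate_topology_on B U \<Longrightarrow> openin X {x \<in> topspace X. f x \<in> U}" for U
  proof (induction rule: generate_topology_on.induct)
    case Empty then show ?case by simp
  next
    case (Int a b)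
    have "{x \<in> topspace X. f x \<in> a \<inter> b} = {x \<in> topspace X. f x \<in> a} \<inter> {x \<in> topspace X. f x \<in> b}" by auto
    then show ?case using Int by auto
  next
    case (UN K)
    have "{x \<in> topspace X. f x \<in> \<Union>K} = (\<Union>k\<in>K. {x \<in> topspace X. f x \<in> k})" by auto
    then show ?case using UN by auto
  next
    case (Basis s) then show ?case by (rule op)
  qed
  then show ?thesis unfolding continuous_map_def openin_topology_generated_by_iff
    using ts by auto
qed



context
  fixes sc :: "'k::real_normed_field \<Rightarrow> 'e::ab_group_add \<Rightarrow> 'e" and q :: "'e \<Rightarrow> real"
  assumes vs: "vector_space sc" and sn: "is_seminorm sc q"
begin

lemma vsm: "module sc" using vs module_iff_vector_space by blast

lemma sn_tri: "q (x + y) \<le> q x + q y"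
  using sn unfolding is_seminorm_def by blast

lemma sn_scale: "q (sc c x) = norm c * q x"
  using sn unfolding is_seminorm_def by blast

lemma sc_zero: "sc 0 x = 0"
  using module.scale_zero_left[OF vsm] by blast

lemma sc_minus: "sc (-1) x = - x"
proof -
  have "sc (-1) x + x = sc (-1) x + sc 1 x" using module.scale_one[OF vsm] by simp
  also have "\<dots> = sc (-1 + 1) x" using module.scale_left_distrib[OF vsm] by metis
  finally have "sc (-1) x + x = 0" using sc_zero by simp
  then show ?thesis by (simp add: eq_neg_iff_add_eq_0)
qed

lemma sn_0: "q 0 = 0"
  using sn_scale[of 0 0] sc_zero[of 0] by simp

lemma sn_minus: "q (- x) = q x"
  using sn_scale[of "-1" x] sc_minus[of x] by simp

lemma sn_nonneg: "q x \<ge> 0"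
  using sn_tri[of x "-x"] sn_minus[of x] sn_0 by simp

lemma sn_diff_sym: "q (x - y) = q (y - x)"
  using sn_minus[of "x - y"] by simp

lemma sn_tri_diff: "q (x - y) \<le> q x + q y"
  using sn_tri[of x "-y"] sn_minus[of y] by simp

lemma sn_scale_real: "t \<ge> 0 \<Longrightarrow> q (sc (of_real t) x) = t * q x"
  using sn_scale[of "of_real t" x] by simp

lemma scale_bound:
  assumes lin: "\<And>c x. e (sc c x) = c * e x" and d0: "\<delta> > 0"
    and B: "\<And>y. q y < \<delta> \<Longrightarrow> norm (e y) \<le> 1"
  shows "norm (e x) * \<delta> \<le> q x"
proof (rule field_le_epsilon)
  fix \<epsilon> :: real assume eps: "\<epsilon> > 0"
  define t where "t = q x + \<epsilon>"
  have t0: "t > 0" using sn_nonneg[of x] eps by (simp add: t_def)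
  have "q (sc (of_real (\<delta>/t)) x) = (\<delta>/t) * q x" using d0 t0 by (intro sn_scale_real) simp
  also have "\<dots> < \<delta>"
  proof -
    have "q x < t" using eps by (simp add: t_def)
    then have "(\<delta>/t) * q x < (\<delta>/t) * t" using d0 t0 by (intro mult_strict_left_mono) auto
    then show ?thesis using t0 by simp
  qed
  finally have "norm (e (sc (of_real (\<delta>/t)) x)) \<le> 1" by (rule B)
  moreover have "norm (e (sc (of_real (\<delta>/t)) x)) = (\<delta>/t) * norm (e x)"
    using d0 t0 by (simp only: lin norm_mult norm_of_real) simp
  ultimately have "(\<delta>/t) * norm (e x) \<le> 1" by simp
  then have "\<delta> * norm (e x) \<le> t" using t0 by (simp add: field_simps)
  then show "norm (e x) * \<delta> \<le> q x + \<epsilon>" by (simp add: t_def mult.commute)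
qed

end

lemma linear_add: "Vector_Spaces.linear sc (*) e \<Longrightarrow> e (x + y) = e x + e y"
  by (simp add: linear_iff_module_hom module_hom.add)

lemma linear_scale: "Vector_Spaces.linear sc (*) e \<Longrightarrow> e (sc c x) = c * e x"
  by (simp add: linear_iff_module_hom module_hom.scale)

lemma linear_diff:
  assumes "vector_space sc" "Vector_Spaces.linear sc (*) (e :: 'e::ab_group_add \<Rightarrow> 'k::real_normed_field)"
  shows "e (x - y) = e x - e y"
proof -
  have "e (x - y) + e y = e x" using linear_add[OF assms(2), of "x - y" y] by simp
  then show ?thesis by (simp add: eq_diff_eq)
qed

lemma module_mult: "module ((*) :: 'k::field \<Rightarrow> 'k \<Rightarrow> 'k)"
  by unfold_locales (simp_all add: algebra_simps)

lemma linearI: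
  assumes vs: "vector_space (sc :: 'k::field \<Rightarrow> 'e::ab_group_add \<Rightarrow> 'e)"
    and add: "\<And>x y. e (x + y) = e x + e y" and sca: "\<And>c x. e (sc c x) = c * e x"
  shows "Vector_Spaces.linear sc (*) e"
  unfolding linear_iff_module_hom module_hom_def module_hom_axioms_def
  using vs module_mult add sca by (simp add: module_iff_vector_space)



locale L13 =
  fixes sc :: "'k::real_normed_field \<Rightarrow> 'e::ab_group_add \<Rightarrow> 'e"
    and p :: "'a \<Rightarrow> 'e \<Rightarrow> real"
    and \<omega> :: "'m \<Rightarrow> 'x set"
    and \<nu> :: "'j \<Rightarrow> 'm \<Rightarrow> 'x \<Rightarrow> real"
    and APK :: "('w \<Rightarrow> 'k) set" and domK :: "'m \<Rightarrow> ('w \<Rightarrow> 'k) set"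
    and TK :: "'m \<Rightarrow> ('w \<Rightarrow> 'k) \<Rightarrow> ('x \<Rightarrow> 'k)"
    and APE :: "('w \<Rightarrow> 'e) set" and domE :: "'m \<Rightarrow> ('w \<Rightarrow> 'e) set"
    and TE :: "'m \<Rightarrow> ('w \<Rightarrow> 'e) \<Rightarrow> ('x \<Rightarrow> 'e)"
  assumes E_vs: "vector_space sc"
    and E_seminorms: "\<forall>\<alpha>. is_seminorm sc (p \<alpha>)"
    and E_directed: "sn_directed UNIV p"
    and \<omega>_ne: "\<forall>m. \<omega> m \<noteq> {}"
    and \<nu>_nonneg: "\<forall>j m. \<forall>x\<in>\<omega> m. \<nu> j m x \<ge> 0"
    and APK_sub: "fun_subspace (*) APK"
    and domK_sub: "\<forall>m. fun_subspace (*) (domK m)"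
    and TK_lin: "\<forall>m. lin_on (*) (domK m) (\<omega> m) (TK m)"
    and FVk_hausdorff: "sn_hausdorff (FVK APK domK TK \<omega> \<nu>) (FVK_sn TK \<omega> \<nu>)"
    and FVk_directed: "sn_directed (FVK APK domK TK \<omega> \<nu>) (FVK_sn TK \<omega> \<nu>)"
    and strong: "\<forall>e'\<in>dual_space sc p. \<forall>f\<in>FVE p APE domE TE \<omega> \<nu>. \<forall>m. e' \<circ> f \<in> APK \<and> e' \<circ> f \<in> domK m \<and>
                    (\<forall>x\<in>\<omega> m. TK m (e' \<circ> f) x = e' (TE m f x))"
begin

abbreviation "FVk \<equiv> FVK APK domK TK \<omega> \<nu>"
abbreviation "qk \<equiv> FVK_sn TK \<omega> \<nu>"
abbreviation "Tk \<equiv> sn_top FVk qk"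
abbreviation "FVe \<equiv> FVE p APE domE TE \<omega> \<nu>"
abbreviation "Te \<equiv> sn_top UNIV p"
abbreviation "E' \<equiv> dual_space sc p"
abbreviation "P \<alpha> \<equiv> polar sc p {x. p \<alpha> x < 1}"

lemma sn_p: "is_seminorm sc (p \<alpha>)" using E_seminorms by blast

lemma fun_plus: "(g + h) = (\<lambda>w. g w + h w)" for g h :: "'w \<Rightarrow> 'k"
  by (simp add: plus_fun_def)

lemma fun_minus: "(g - h) = (\<lambda>w. g w + (-1) * h w)" for g h :: "'w \<Rightarrow> 'k"
  by (simp add: fun_diff_def)

lemma fun_uminus: "(- h) = (\<lambda>w. (-1) * h w)" for h :: "'w \<Rightarrow> 'k"
  by (simp add: fun_Compl_def)

lemma fun_zero: "(0 :: 'w \<Rightarrow> 'k) = (\<lambda>w. 0)"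
  by (simp add: zero_fun_def)

lemma sub_add: "fun_subspace (*) A \<Longrightarrow> g \<in> A \<Longrightarrow> h \<in> A \<Longrightarrow> (\<lambda>w. g w + h w) \<in> A"
  and sub_scale: "fun_subspace (*) A \<Longrightarrow> g \<in> A \<Longrightarrow> (\<lambda>w. c * g w) \<in> A"
  and sub_zero: "fun_subspace (*) A \<Longrightarrow> (\<lambda>w. 0) \<in> A"
  for A :: "('w \<Rightarrow> 'k) set"
  unfolding fun_subspace_def by blast+

lemma TK_add: "g \<in> domK m \<Longrightarrow> h \<in> domK m \<Longrightarrow> x \<in> \<omega> m \<Longrightarrow> TK m (\<lambda>w. g w + h w) x = TK m g x + TK m h x"
  using TK_lin unfolding lin_on_def by blast

lemma TK_scale: "g \<in> domK m \<Longrightarrow> x \<in> \<omega> m \<Longrightarrow> TK m (\<lambda>w. c * g w) x = c * TK m g x"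
  using TK_lin unfolding lin_on_def by blast

lemma FVk_iff: "g \<in> FVk \<longleftrightarrow> g \<in> APK \<and> (\<forall>m. g \<in> domK m) \<and> (\<forall>j m. bdd_above ((\<lambda>x. norm (TK m g x) * \<nu> j m x) ` \<omega> m))"
  by (simp add: FVK_def)

lemma bdd_le: "bdd_above (f ` S) \<Longrightarrow> (\<forall>x\<in>S. g x \<le> f x) \<Longrightarrow> bdd_above (g ` S)"
proof -
  assume b: "bdd_above (f ` S)" and le: "\<forall>x\<in>S. g x \<le> f x"
  obtain M where M: "\<forall>x\<in>S. f x \<le> M" using b by (auto simp: bdd_above_def)
  have "\<forall>x\<in>S. g x \<le> M" using M le order_trans by blast
  then show ?thesis by (intro bdd_aboveI[of _ M]) blast
qed

lemma bdd_add: "bdd_above (f ` S) \<Longrightarrow> bdd_above (g ` S) \<Longrightarrow> (\<forall>x\<in>S. h x \<le> f x + g x) \<Longrightarrow> bdd_above (h ` S)"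
  for f g h :: "_ \<Rightarrow> real"
proof -
  assume b: "bdd_above (f ` S)" "bdd_above (g ` S)" and le: "\<forall>x\<in>S. h x \<le> f x + g x"
  obtain M1 where M1: "\<forall>x\<in>S. f x \<le> M1" using b by (auto simp: bdd_above_def)
  obtain M2 where M2: "\<forall>x\<in>S. g x \<le> M2" using b by (auto simp: bdd_above_def)
  have "\<forall>x\<in>S. h x \<le> M1 + M2"
  proof
    fix x assume x: "x \<in> S"
    have "f x \<le> M1" "g x \<le> M2" "h x \<le> f x + g x" using M1 M2 le x by auto
    then show "h x \<le> M1 + M2" by linarith
  qed
  then show ?thesis by (intro bdd_aboveI[of _ "M1 + M2"]) blast
qed

lemma FVk_add: assumes "g \<in> FVk" "h \<in> FVk" shows "(\<lambda>w. g w + h w) \<in> FVk"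
proof -
  have "(\<lambda>w. g w + h w) \<in> APK" using assms APK_sub by (auto simp: FVk_iff intro: sub_add)
  moreover have "\<forall>m. (\<lambda>w. g w + h w) \<in> domK m" using assms domK_sub by (auto simp: FVk_iff intro: sub_add)
  moreover have "bdd_above ((\<lambda>x. norm (TK m (\<lambda>w. g w + h w) x) * \<nu> j m x) ` \<omega> m)" for j m
  proof (rule bdd_add)
    show "bdd_above ((\<lambda>x. norm (TK m g x) * \<nu> j m x) ` \<omega> m)" using assms by (simp add: FVk_iff)
    show "bdd_above ((\<lambda>x. norm (TK m h x) * \<nu> j m x) ` \<omega> m)" using assms by (simp add: FVk_iff)
    show "\<forall>x\<in>\<omega> m. norm (TK m (\<lambda>w. g w + h w) x) * \<nu> j m x \<le> norm (TK m g x) * \<nu> j m x + norm (TK m h x) * \<nu> j m x"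
    proof
      fix x assume x: "x \<in> \<omega> m"
      have "TK m (\<lambda>w. g w + h w) x = TK m g x + TK m h x" using assms x by (intro TK_add) (auto simp: FVk_iff)
      then have "norm (TK m (\<lambda>w. g w + h w) x) \<le> norm (TK m g x) + norm (TK m h x)" by (simp add: norm_triangle_ineq)
      then show "norm (TK m (\<lambda>w. g w + h w) x) * \<nu> j m x \<le> norm (TK m g x) * \<nu> j m x + norm (TK m h x) * \<nu> j m x"
        using \<nu>_nonneg x by (simp add: mult_right_mono flip: distrib_right)
    qed
  qed
  ultimately show ?thesis by (simp add: FVk_iff)
qed

lemma FVk_scale: assumes "g \<in> FVk" shows "(\<lambda>w. c * g w) \<in> FVk"
proof -
  have "(\<lambda>w. c * g w) \<in> APK" using assms APK_sub by (auto simp: FVk_iff intro: sub_scale)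
  moreover have "\<forall>m. (\<lambda>w. c * g w) \<in> domK m" using assms domK_sub by (auto simp: FVk_iff intro: sub_scale)
  moreover have "bdd_above ((\<lambda>x. norm (TK m (\<lambda>w. c * g w) x) * \<nu> j m x) ` \<omega> m)" for j m
  proof -
    have b: "bdd_above ((\<lambda>x. norm (TK m g x) * \<nu> j m x) ` \<omega> m)" using assms by (simp add: FVk_iff)
    have "bdd_above ((\<lambda>x. norm c * (norm (TK m g x) * \<nu> j m x)) ` \<omega> m)"
    proof -
      obtain M where M: "\<forall>x\<in>\<omega> m. norm (TK m g x) * \<nu> j m x \<le> M" using b by (auto simp: bdd_above_def)
      have "\<forall>x\<in>\<omega> m. norm c * (norm (TK m g x) * \<nu> j m x) \<le> norm c * M"
        using M by (simp add: mult_left_mono)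
      then show ?thesis by (intro bdd_aboveI[of _ "norm c * M"]) blast
    qed
    moreover have "\<forall>x\<in>\<omega> m. norm (TK m (\<lambda>w. c * g w) x) * \<nu> j m x \<le> norm c * (norm (TK m g x) * \<nu> j m x)"
      using assms by (auto simp: TK_scale FVk_iff norm_mult)
    ultimately show ?thesis by (rule bdd_le)
  qed
  ultimately show ?thesis by (simp add: FVk_iff)
qed

lemma FVk_plus: "g \<in> FVk \<Longrightarrow> h \<in> FVk \<Longrightarrow> g + h \<in> FVk"
  unfolding fun_plus by (rule FVk_add)

lemma FVk_diff: assumes g: "g \<in> FVk" and h: "h \<in> FVk" shows "g - h \<in> FVk"
  unfolding fun_minus using FVk_add[OF g FVk_scale[OF h, of "-1"]] .

lemma FVk_uminus: "h \<in> FVk \<Longrightarrow> - h \<in> FVk"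
  unfolding fun_uminus by (rule FVk_scale)

lemma TK_zero: "x \<in> \<omega> m \<Longrightarrow> TK m 0 x = 0"
proof -
  assume x: "x \<in> \<omega> m"
  have z: "(\<lambda>w. 0) \<in> domK m" using domK_sub sub_zero by blast
  have "TK m (\<lambda>w. 0 * (\<lambda>w. 0::'k) w) x = 0 * TK m (\<lambda>w. 0) x" by (rule TK_scale[OF z x])
  then show ?thesis by (simp add: fun_zero)
qed

lemma FVk_zero: "(0 :: 'w \<Rightarrow> 'k) \<in> FVk"
proof -
  have a: "(0::'w \<Rightarrow> 'k) \<in> APK" using APK_sub sub_zero unfolding fun_zero by blast
  have d: "\<forall>m. (0::'w \<Rightarrow> 'k) \<in> domK m" using domK_sub sub_zero unfolding fun_zero by blast
  have b: "bdd_above ((\<lambda>x. norm (TK m 0 x) * \<nu> j m x) ` \<omega> m)" for j m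
  proof (rule bdd_aboveI[of _ 0])
    fix y assume "y \<in> (\<lambda>x. norm (TK m 0 x) * \<nu> j m x) ` \<omega> m"
    then obtain x where x: "x \<in> \<omega> m" "y = norm (TK m 0 x) * \<nu> j m x" by blast
    have "TK m 0 x = 0" by (rule TK_zero[OF x(1)])
    then show "y \<le> 0" using x(2) by simp
  qed
  show ?thesis unfolding FVk_iff
  proof (intro conjI allI)
    show "(0::'w \<Rightarrow> 'k) \<in> APK" by (rule a)
    fix m show "(0::'w \<Rightarrow> 'k) \<in> domK m" using d by blast
  next
    fix j m show "bdd_above ((\<lambda>x. norm (TK m 0 x) * \<nu> j m x) ` \<omega> m)" by (rule b)
  qed
qed

lemma TK_plus: "g \<in> FVk \<Longrightarrow> h \<in> FVk \<Longrightarrow> x \<in> \<omega> m \<Longrightarrow> TK m (g + h) x = TK m g x + TK m h x"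
  unfolding fun_plus by (intro TK_add) (auto simp: FVk_iff)

lemma TK_uminus: "h \<in> FVk \<Longrightarrow> x \<in> \<omega> m \<Longrightarrow> TK m (- h) x = - TK m h x"
  unfolding fun_uminus by (subst TK_scale) (auto simp: FVk_iff)

lemma TK_diff: "g \<in> FVk \<Longrightarrow> h \<in> FVk \<Longrightarrow> x \<in> \<omega> m \<Longrightarrow> TK m (g - h) x = TK m g x - TK m h x"
  using TK_plus[of g "- h" x m] TK_uminus[of h x m] FVk_uminus[of h] by simp

lemma qk_eq: "qk (j, m) g = (SUP x\<in>\<omega> m. norm (TK m g x) * \<nu> j m x)"
  by (simp add: FVK_sn_def)

lemma qk_upper: "g \<in> FVk \<Longrightarrow> x \<in> \<omega> m \<Longrightarrow> norm (TK m g x) * \<nu> j m x \<le> qk (j, m) g"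
  unfolding qk_eq by (rule cSUP_upper) (auto simp: FVk_iff)

lemma qk_least: "(\<And>x. x \<in> \<omega> m \<Longrightarrow> norm (TK m g x) * \<nu> j m x \<le> B) \<Longrightarrow> qk (j, m) g \<le> B"
  unfolding qk_eq using \<omega>_ne by (intro cSUP_least) auto

lemma qk_nonneg: "g \<in> FVk \<Longrightarrow> qk i g \<ge> 0"
proof (cases i)
  case (Pair j m)
  assume g: "g \<in> FVk"
  obtain x where x: "x \<in> \<omega> m" using \<omega>_ne by blast
  have "0 \<le> norm (TK m g x) * \<nu> j m x" using \<nu>_nonneg x by simp
  also have "\<dots> \<le> qk (j, m) g" by (rule qk_upper[OF g x])
  finally show ?thesis using Pair by simp
qed

lemma qk_tri: "g \<in> FVk \<Longrightarrow> h \<in> FVk \<Longrightarrow> qk i (g + h) \<le> qk i g + qk i h"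
proof (cases i)
  case (Pair j m)
  assume g: "g \<in> FVk" and h: "h \<in> FVk"
  have "qk (j, m) (g + h) \<le> qk (j, m) g + qk (j, m) h"
  proof (rule qk_least)
    fix x assume x: "x \<in> \<omega> m"
    have "norm (TK m (g + h) x) * \<nu> j m x \<le> (norm (TK m g x) + norm (TK m h x)) * \<nu> j m x"
      using \<nu>_nonneg x by (intro mult_right_mono) (auto simp: TK_plus[OF g h x] norm_triangle_ineq)
    also have "\<dots> \<le> qk (j, m) g + qk (j, m) h"
      using qk_upper[OF g x, of j] qk_upper[OF h x, of j] by (simp add: distrib_right)
    finally show "norm (TK m (g + h) x) * \<nu> j m x \<le> qk (j, m) g + qk (j, m) h" .
  qed
  then show ?thesis using Pair by simp
qed

lemma qk_uminus: "h \<in> FVk \<Longrightarrow> qk i (- h) = qk i h"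
proof (cases i)
  case (Pair j m)
  assume h: "h \<in> FVk"
  have "qk (j, m) (- h) = (SUP x\<in>\<omega> m. norm (TK m h x) * \<nu> j m x)"
    unfolding qk_eq by (intro SUP_cong) (simp_all add: TK_uminus[OF h])
  then show ?thesis using Pair by (simp add: qk_eq)
qed

lemma qk_zero: "qk i 0 = 0"
proof (cases i)
  case (Pair j m)
  have "qk (j, m) 0 = (SUP x\<in>\<omega> m. 0)"
    unfolding qk_eq by (intro SUP_cong) (simp_all add: TK_zero)
  then show ?thesis using Pair \<omega>_ne by simp
qed

lemma qk_scale_le: "g \<in> FVk \<Longrightarrow> qk i (\<lambda>w. c * g w) \<le> norm c * qk i g"
proof (cases i)
  case (Pair j m)
  assume g: "g \<in> FVk"
  have "qk (j, m) (\<lambda>w. c * g w) \<le> norm c * qk (j, m) g"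
  proof (rule qk_least)
    fix x assume x: "x \<in> \<omega> m"
    have "norm (TK m (\<lambda>w. c * g w) x) * \<nu> j m x = norm c * (norm (TK m g x) * \<nu> j m x)"
      using g x by (simp add: TK_scale FVk_iff norm_mult)
    also have "\<dots> \<le> norm c * qk (j, m) g" using qk_upper[OF g x] by (simp add: mult_left_mono)
    finally show "norm (TK m (\<lambda>w. c * g w) x) * \<nu> j m x \<le> norm c * qk (j, m) g" .
  qed
  then show ?thesis using Pair by simp
qed

lemma Tk_topspace: "topspace Tk = FVk"
  by (rule sn_topspace) (rule qk_zero)

lemma Tk_hausdorff: "Hausdorff_space Tk"
  by (rule sn_hausdorff_space[OF FVk_diff qk_tri qk_uminus qk_nonneg qk_zero FVk_hausdorff])

lemma Tk_nbhd: "openin Tk U \<Longrightarrow> g \<in> U \<Longrightarrow> \<exists>i \<delta>. \<delta> > 0 \<and> (\<forall>y\<in>FVk. qk i (y - g) < \<delta> \<longrightarrow> y \<in> U)"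
  by (rule sn_nbhd[OF FVk_diff qk_tri FVk_directed])

lemma Te_topspace: "topspace Te = UNIV"
  by (rule sn_topspace) (simp add: sn_0[OF E_vs sn_p])

lemma Te_nbhd: "openin Te U \<Longrightarrow> g \<in> U \<Longrightarrow> \<exists>\<beta> \<delta>. \<delta> > 0 \<and> (\<forall>y. p \<beta> (y - g) < \<delta> \<longrightarrow> y \<in> U)"
proof -
  assume U: "openin Te U" and g: "g \<in> U"
  have "\<exists>i \<delta>. \<delta> > 0 \<and> (\<forall>y\<in>UNIV. p i (y - g) < \<delta> \<longrightarrow> y \<in> U)"
    by (rule sn_nbhd[OF _ sn_tri[OF E_vs sn_p] E_directed U g]) simp
  then show ?thesis by simp
qed


lemma dual_linear: "e' \<in> E' \<Longrightarrow> Vector_Spaces.linear sc (*) e'"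
  by (simp add: dual_space_def)

lemma dual_cont: "e' \<in> E' \<Longrightarrow> continuous_map Te euclidean e'"
  by (simp add: dual_space_def)

lemma dual_0: "e' \<in> E' \<Longrightarrow> e' 0 = 0"
  using linear_add[OF dual_linear, of e' 0 0] by simp

lemma scale_bound_p:
  assumes "\<And>c x. e (sc c x) = c * e x" "\<delta> > 0" "\<And>y. p \<beta> y < \<delta> \<Longrightarrow> norm (e y) \<le> 1"
  shows "norm (e x) * \<delta> \<le> p \<beta> x"
  by (rule scale_bound[OF E_vs sn_p assms])

lemma dual_bound: assumes e: "e' \<in> E'" shows "\<exists>\<beta> C. C \<ge> 0 \<and> (\<forall>x. norm (e' x) \<le> C * p \<beta> x)"
proof -
  have "openin Te {x \<in> topspace Te. e' x \<in> ball 0 1}"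
    by (rule openin_continuous_map_preimage[OF dual_cont[OF e]]) simp
  moreover have "0 \<in> {x \<in> topspace Te. e' x \<in> ball 0 1}" using dual_0[OF e] Te_topspace by simp
  ultimately obtain \<beta> \<delta> where d: "\<delta> > 0" "\<forall>y. p \<beta> (y - 0) < \<delta> \<longrightarrow> y \<in> {x \<in> topspace Te. e' x \<in> ball 0 1}"
    using Te_nbhd by blast
  have B: "norm (e' y) \<le> 1" if "p \<beta> y < \<delta>" for y
    using d(2) that by fastforce
  have "norm (e' x) * \<delta> \<le> p \<beta> x" for x
    by (rule scale_bound_p[OF linear_scale[OF dual_linear[OF e]] d(1) B])
  then have "\<forall>x. norm (e' x) \<le> (1/\<delta>) * p \<beta> x" using d(1) by (simp add: field_simps)
  then show ?thesis using d(1) by (intro exI[of _ \<beta>] exI[of _ "1/\<delta>"]) simp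
qed

lemma polar_sub: "e' \<in> P \<alpha> \<Longrightarrow> e' \<in> E'"
  by (simp add: polar_def)

lemma polar_bound: assumes e: "e' \<in> P \<alpha>" shows "norm (e' x) \<le> p \<alpha> x"
proof -
  have B: "norm (e' y) \<le> 1" if "p \<alpha> y < 1" for y using e that by (simp add: polar_def)
  have "norm (e' x) * 1 \<le> p \<alpha> x"
    by (rule scale_bound_p) (use linear_scale[OF dual_linear[OF polar_sub[OF e]]] B in auto)
  then show ?thesis by simp
qed

lemma FVe_bdd: "f \<in> FVe \<Longrightarrow> bdd_above ((\<lambda>x. p \<alpha> (TE m f x) * \<nu> j m x) ` \<omega> m)"
  by (simp add: FVE_def)

lemma bdd_scale: "bdd_above (f ` S) \<Longrightarrow> (c::real) \<ge> 0 \<Longrightarrow> bdd_above ((\<lambda>x. c * f x) ` S)"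
proof -
  assume b: "bdd_above (f ` S)" and c: "c \<ge> 0"
  obtain M where M: "\<forall>x\<in>S. f x \<le> M" using b by (auto simp: bdd_above_def)
  have "\<forall>x\<in>S. c * f x \<le> c * M" using M c by (simp add: mult_left_mono)
  then show ?thesis by (intro bdd_aboveI[of _ "c * M"]) blast
qed

lemma comp_FVk:
  assumes f: "f \<in> FVe" and e: "e' \<in> E'" and C: "C \<ge> 0" "\<forall>x. norm (e' x) \<le> C * p \<beta> x"
  shows "e' \<circ> f \<in> FVk"
proof -
  have a: "e' \<circ> f \<in> APK" "\<forall>m. e' \<circ> f \<in> domK m" using strong f e by blast+
  have b: "bdd_above ((\<lambda>x. norm (TK m (e' \<circ> f) x) * \<nu> j m x) ` \<omega> m)" for j m
  proof (rule bdd_le)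
    show "bdd_above ((\<lambda>x. C * (p \<beta> (TE m f x) * \<nu> j m x)) ` \<omega> m)"
      by (rule bdd_scale[OF FVe_bdd[OF f] C(1)])
    show "\<forall>x\<in>\<omega> m. norm (TK m (e' \<circ> f) x) * \<nu> j m x \<le> C * (p \<beta> (TE m f x) * \<nu> j m x)"
    proof
      fix x assume x: "x \<in> \<omega> m"
      have "TK m (e' \<circ> f) x = e' (TE m f x)" using strong f e x by blast
      then have "norm (TK m (e' \<circ> f) x) * \<nu> j m x \<le> (C * p \<beta> (TE m f x)) * \<nu> j m x"
        using C(2) \<nu>_nonneg x by (simp add: mult_right_mono)
      then show "norm (TK m (e' \<circ> f) x) * \<nu> j m x \<le> C * (p \<beta> (TE m f x) * \<nu> j m x)"
        by (simp add: mult.assoc)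
    qed
  qed
  show ?thesis unfolding FVk_iff
  proof (intro conjI allI)
    show "e' \<circ> f \<in> APK" by (rule a(1))
    fix m show "e' \<circ> f \<in> domK m" using a(2) by blast
  next
    fix j m show "bdd_above ((\<lambda>x. norm (TK m (e' \<circ> f) x) * \<nu> j m x) ` \<omega> m)" by (rule b)
  qed
qed

lemma sigma: "f \<in> FVe \<Longrightarrow> f \<in> FV_sigma E' FVk"
  unfolding FV_sigma_def using dual_bound comp_FVk by blast

lemma polar_comp_FVk: "f \<in> FVe \<Longrightarrow> e' \<in> P \<alpha> \<Longrightarrow> e' \<circ> f \<in> FVk"
  using comp_FVk[of f e' 1 \<alpha>] polar_bound polar_sub by simp

lemma polar_qk:
  assumes f: "f \<in> FVe" and e: "e' \<in> P \<alpha>"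
  shows "qk (j, m) (e' \<circ> f) \<le> (SUP x\<in>\<omega> m. p \<alpha> (TE m f x) * \<nu> j m x)"
proof (rule qk_least)
  fix x assume x: "x \<in> \<omega> m"
  have "TK m (e' \<circ> f) x = e' (TE m f x)" using strong f polar_sub[OF e] x by blast
  then have "norm (TK m (e' \<circ> f) x) * \<nu> j m x \<le> p \<alpha> (TE m f x) * \<nu> j m x"
    using polar_bound[OF e] \<nu>_nonneg x by (simp add: mult_right_mono)
  also have "\<dots> \<le> (SUP x\<in>\<omega> m. p \<alpha> (TE m f x) * \<nu> j m x)"
    by (rule cSUP_upper[OF x FVe_bdd[OF f]])
  finally show "norm (TK m (e' \<circ> f) x) * \<nu> j m x \<le> (SUP x\<in>\<omega> m. p \<alpha> (TE m f x) * \<nu> j m x)" .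
qed


lemma additive_diff: "(\<forall>x y. e (x + y) = e x + e y) \<Longrightarrow> e (x - y) = e x - (e y :: 'k)" for x y :: 'e
proof -
  assume a: "\<forall>x y. e (x + y) = e x + e y"
  have "e (x - y) + e y = e x" using a[rule_format, of "x - y" y] by simp
  then show ?thesis by (simp add: eq_diff_eq)
qed

lemma cont_from_bound:
  assumes add: "\<forall>x y. e (x + y) = e x + e y" and b: "\<forall>x. norm (e x) \<le> p \<alpha> x"
  shows "continuous_map Te euclidean (e :: 'e \<Rightarrow> 'k)"
  unfolding continuous_map_def
proof (intro conjI allI impI)
  show "e \<in> topspace Te \<rightarrow> topspace euclidean" by simp
  fix V :: "'k set" assume "openin euclidean V"
  then have V: "open V" by simp
  show "openin Te {x \<in> topspace Te. e x \<in> V}"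
  proof (subst openin_subopen, intro ballI)
    fix x0 assume x0: "x0 \<in> {x \<in> topspace Te. e x \<in> V}"
    then obtain r where r: "r > 0" "ball (e x0) r \<subseteq> V" using V open_contains_ball_eq by blast
    define T where "T = {y \<in> UNIV. p \<alpha> (y - x0) < r}"
    have "openin Te T" unfolding T_def by (rule sn_ball_open) (use r in auto)
    moreover have "x0 \<in> T" using r by (simp add: T_def sn_0[OF E_vs sn_p])
    moreover have "T \<subseteq> {x \<in> topspace Te. e x \<in> V}"
    proof
      fix y assume y: "y \<in> T"
      have "norm (e y - e x0) = norm (e (y - x0))" using additive_diff[OF add] by simp
      also have "\<dots> \<le> p \<alpha> (y - x0)" using b by blast
      also have "\<dots> < r" using y by (simp add: T_def)
      finally have "e y \<in> ball (e x0) r" by (simp add: dist_norm norm_minus_commute)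
      then show "y \<in> {x \<in> topspace Te. e x \<in> V}" using r Te_topspace by auto
    qed
    ultimately show "\<exists>T. openin Te T \<and> x0 \<in> T \<and> T \<subseteq> {x \<in> topspace Te. e x \<in> V}" by blast
  qed
qed

definition Q :: "'a \<Rightarrow> ('e \<Rightarrow> 'k) set" where
  "Q \<alpha> = {e. (\<forall>x y. e (x + y) = e x + e y) \<and> (\<forall>c x. e (sc c x) = c * e x) \<and> (\<forall>x. norm (e x) \<le> p \<alpha> x)}"

lemma P_eq: "P \<alpha> = Q \<alpha>"
proof
  show "P \<alpha> \<subseteq> Q \<alpha>"
  proof
    fix e assume e: "e \<in> P \<alpha>"
    have l: "Vector_Spaces.linear sc (*) e" by (rule dual_linear[OF polar_sub[OF e]])
    show "e \<in> Q \<alpha>" unfolding Q_def using linear_add[OF l] linear_scale[OF l] polar_bound[OF e] by blast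
  qed
next
  show "Q \<alpha> \<subseteq> P \<alpha>"
  proof
    fix e assume e: "e \<in> Q \<alpha>"
    have add: "\<forall>x y. e (x + y) = e x + e y" and sca: "\<forall>c x. e (sc c x) = c * e x"
      and b: "\<forall>x. norm (e x) \<le> p \<alpha> x" using e by (simp_all add: Q_def)
    have "Vector_Spaces.linear sc (*) e" by (rule linearI[OF E_vs]) (use add sca in auto)
    moreover have "continuous_map Te euclidean e" by (rule cont_from_bound[OF add b])
    ultimately have "e \<in> E'" by (simp add: dual_space_def)
    moreover have "\<forall>x\<in>{x. p \<alpha> x < 1}. norm (e x) \<le> 1" using b by (meson less_eq_real_def mem_Collect_eq order_trans)
    ultimately show "e \<in> P \<alpha>" by (simp add: polar_def)
  qed
qed

lemma P_compact: "compact (P \<alpha>)"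
proof -
  define K where "K = PiE UNIV (\<lambda>x. cball (0::'k) (p \<alpha> x))"
  have "compactin (product_topology (\<lambda>_. euclidean) UNIV) K"
    unfolding K_def compactin_PiE by (simp add: compact_cball_field)
  then have cK: "compact K" by (simp add: euclidean_product_topology)
  have coord: "continuous_on UNIV (\<lambda>e::'e \<Rightarrow> 'k. e x)" for x by simp
  have c1: "closed {e::'e \<Rightarrow> 'k. \<forall>x y. e (x + y) = e x + e y}"
    by (intro closed_Collect_all closed_Collect_eq coord continuous_on_add)
  have c2: "closed {e::'e \<Rightarrow> 'k. \<forall>c x. e (sc c x) = c * e x}"
    by (intro closed_Collect_all closed_Collect_eq coord continuous_on_mult_left)
  have c3: "closed {e::'e \<Rightarrow> 'k. \<forall>x. norm (e x) \<le> p \<alpha> x}"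
    by (intro closed_Collect_all closed_Collect_le continuous_on_norm coord continuous_on_const)
  have cQ: "closed (Q \<alpha>)" unfolding Q_def by (intro closed_Collect_conj c1 c2 c3)
  have "Q \<alpha> \<subseteq> K" unfolding Q_def K_def by (auto simp: PiE_def extensional_def)
  then have "K \<inter> Q \<alpha> = Q \<alpha>" by blast
  moreover have "compact (K \<inter> Q \<alpha>)" by (rule compact_Int_closed[OF cK cQ])
  ultimately show ?thesis by (simp add: P_eq)
qed


definition UC :: "('w \<Rightarrow> 'e) \<Rightarrow> 'a \<Rightarrow> bool" where
  "UC f \<alpha> \<longleftrightarrow> (\<forall>j m. \<forall>\<eta>>0. \<exists>F. finite F \<and>
      (\<forall>x\<in>\<omega> m. \<exists>y\<in>F. p \<alpha> (sc (of_real (\<nu> j m x)) (TE m f x) - y) \<le> \<eta>))"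

lemma TK_comp: "f \<in> FVe \<Longrightarrow> e' \<in> E' \<Longrightarrow> x \<in> \<omega> m \<Longrightarrow> TK m (e' \<circ> f) x = e' (TE m f x)"
  using strong by blast

lemma est:
  assumes e: "e' \<in> P \<alpha>" and e0: "e0 \<in> P \<alpha>" and f: "f \<in> FVe" and g: "g \<in> FVk" and x: "x \<in> \<omega> m"
    and vy: "p \<alpha> (sc (of_real (\<nu> j m x)) (TE m f x) - y) \<le> \<eta>" and ey: "norm (e' y - e0 y) < \<eta>"
  shows "norm (TK m ((e' \<circ> f) - g) x) * \<nu> j m x \<le> qk (j, m) ((e0 \<circ> f) - g) + 3 * \<eta>"
proof -
  define n where "n = \<nu> j m x"
  define w where "w = TE m f x"
  define v where "v = sc (of_real n) w"
  define A where "A = TK m g x"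
  have n0: "n \<ge> 0" using \<nu>_nonneg x by (simp add: n_def)
  have l': "Vector_Spaces.linear sc (*) e'" by (rule dual_linear[OF polar_sub[OF e]])
  have l0: "Vector_Spaces.linear sc (*) e0" by (rule dual_linear[OF polar_sub[OF e0]])
  have F': "e' \<circ> f \<in> FVk" by (rule polar_comp_FVk[OF f e])
  have F0: "e0 \<circ> f \<in> FVk" by (rule polar_comp_FVk[OF f e0])
  have T': "TK m ((e' \<circ> f) - g) x = e' w - A"
    using TK_diff[OF F' g x] TK_comp[OF f polar_sub[OF e] x] by (simp add: w_def A_def)
  have T0: "TK m ((e0 \<circ> f) - g) x = e0 w - A"
    using TK_diff[OF F0 g x] TK_comp[OF f polar_sub[OF e0] x] by (simp add: w_def A_def)
  have ev': "e' v = of_real n * e' w" by (simp add: v_def linear_scale[OF l'])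
  have ev0: "e0 v = of_real n * e0 w" by (simp add: v_def linear_scale[OF l0])
  have eq1: "norm (e' w - A) * n = norm (e' v - of_real n * A)"
  proof -
    have "e' v - of_real n * A = of_real n * (e' w - A)" by (simp add: ev' algebra_simps)
    then show ?thesis using n0 by (simp add: norm_mult mult.commute)
  qed
  have eq0: "norm (e0 w - A) * n = norm (e0 v - of_real n * A)"
  proof -
    have "e0 v - of_real n * A = of_real n * (e0 w - A)" by (simp add: ev0 algebra_simps)
    then show ?thesis using n0 by (simp add: norm_mult mult.commute)
  qed
  have d: "e' v - e0 v = e' (v - y) + (e' y - e0 y) + e0 (y - v)"
    using linear_diff[OF E_vs l', of v y] linear_diff[OF E_vs l0, of y v] by simp
  have pvy: "p \<alpha> (v - y) \<le> \<eta>" using vy by (simp add: v_def w_def n_def)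
  have pyv: "p \<alpha> (y - v) \<le> \<eta>" using pvy sn_diff_sym[OF E_vs sn_p] by metis
  have "norm (e' v - e0 v) \<le> norm (e' (v - y)) + norm (e' y - e0 y) + norm (e0 (y - v))"
    unfolding d by (meson add_mono norm_triangle_ineq order_trans order_refl)
  also have "\<dots> \<le> \<eta> + \<eta> + \<eta>"
    using polar_bound[OF e, of "v - y"] polar_bound[OF e0, of "y - v"] pvy pyv ey by linarith
  finally have nd: "norm (e' v - e0 v) \<le> 3 * \<eta>" by simp
  have "norm (e' v - of_real n * A) \<le> norm (e0 v - of_real n * A) + norm (e' v - e0 v)"
  proof -
    have "e' v - of_real n * A = (e0 v - of_real n * A) + (e' v - e0 v)" by simp
    then show ?thesis by (metis norm_triangle_ineq)
  qed
  moreover have "norm (e0 v - of_real n * A) \<le> qk (j, m) ((e0 \<circ> f) - g)"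
    using qk_upper[OF FVk_diff[OF F0 g] x, of j] T0 eq0 by (simp add: n_def)
  ultimately have "norm (e' v - of_real n * A) \<le> qk (j, m) ((e0 \<circ> f) - g) + 3 * \<eta>" using nd by linarith
  then show ?thesis using T' eq1 by (simp add: n_def)
qed

lemma Phi_cont:
  assumes f: "f \<in> FVe" and uc: "UC f \<alpha>"
  shows "continuous_map (subtopology euclidean (P \<alpha>)) Tk (\<lambda>e'. e' \<circ> f)"
proof -
  define B where "B = {{y. qk i (y - x) < e} | i x e. x \<in> FVk \<and> e > 0}"
  have Tk_eq: "Tk = subtopology (topology_generated_by B) FVk" by (simp add: sn_top_def B_def)
  have top: "topspace (subtopology euclidean (P \<alpha>)) = P \<alpha>" by simp
  have gen: "continuous_map (subtopology euclidean (P \<alpha>)) (topology_generated_by B) (\<lambda>e'. e' \<circ> f)"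
  proof (rule continuous_map_generated)
    fix e' assume "e' \<in> topspace (subtopology euclidean (P \<alpha>))"
    then have h: "e' \<circ> f \<in> FVk" using polar_comp_FVk[OF f] by simp
    have "{y. qk undefined (y - (e' \<circ> f)) < 1} \<in> B"
      unfolding B_def mem_Collect_eq using h by (intro exI[of _ undefined] exI[of _ "e' \<circ> f"] exI[of _ "1::real"]) simp
    moreover have "e' \<circ> f \<in> {y. qk undefined (y - (e' \<circ> f)) < 1}" by (simp add: qk_zero)
    ultimately show "e' \<circ> f \<in> \<Union>B" by blast
  next
    fix b assume "b \<in> B"
    then have "\<exists>i g e. b = {y. qk i (y - g) < e} \<and> g \<in> FVk \<and> e > 0" by (simp add: B_def)
    then obtain i g e where b: "b = {y. qk i (y - g) < e}" and g: "g \<in> FVk" and e0: "e > 0" by blast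
    obtain j m where i: "i = (j, m)" by (cases i)
    show "openin (subtopology euclidean (P \<alpha>)) {x \<in> topspace (subtopology euclidean (P \<alpha>)). x \<circ> f \<in> b}"
    proof (subst openin_subopen, intro ballI)
      fix a0 assume a0: "a0 \<in> {x \<in> topspace (subtopology euclidean (P \<alpha>)). x \<circ> f \<in> b}"
      have a0P: "a0 \<in> P \<alpha>" and s0: "qk (j, m) ((a0 \<circ> f) - g) < e" using a0 b i by auto
      define \<eta> where "\<eta> = (e - qk (j, m) ((a0 \<circ> f) - g)) / 4"
      have eta: "\<eta> > 0" using s0 by (simp add: \<eta>_def)
      obtain F where F: "finite F" "\<forall>x\<in>\<omega> m. \<exists>y\<in>F. p \<alpha> (sc (of_real (\<nu> j m x)) (TE m f x) - y) \<le> \<eta>"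
        using uc eta unfolding UC_def by blast
      define W where "W = (\<Inter>y\<in>F. {e'::'e \<Rightarrow> 'k. norm (e' y - a0 y) < \<eta>})"
      have oW: "open W" unfolding W_def
        by (intro open_INT F(1) ballI open_Collect_less continuous_on_norm continuous_on_diff
            continuous_on_product_coordinates continuous_on_const)
      define T where "T = W \<inter> P \<alpha>"
      have "openin (subtopology euclidean (P \<alpha>)) T" unfolding T_def openin_subtopology using oW by auto
      moreover have "a0 \<in> T" using a0P eta by (simp add: T_def W_def)
      moreover have "T \<subseteq> {x \<in> topspace (subtopology euclidean (P \<alpha>)). x \<circ> f \<in> b}"
      proof
        fix e' assume e': "e' \<in> T"
        then have eP: "e' \<in> P \<alpha>" and eW: "\<forall>y\<in>F. norm (e' y - a0 y) < \<eta>" by (auto simp: T_def W_def)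
        have "qk (j, m) ((e' \<circ> f) - g) \<le> qk (j, m) ((a0 \<circ> f) - g) + 3 * \<eta>"
        proof (rule qk_least)
          fix x assume x: "x \<in> \<omega> m"
          then obtain y where y: "y \<in> F" "p \<alpha> (sc (of_real (\<nu> j m x)) (TE m f x) - y) \<le> \<eta>" using F(2) by blast
          show "norm (TK m ((e' \<circ> f) - g) x) * \<nu> j m x \<le> qk (j, m) ((a0 \<circ> f) - g) + 3 * \<eta>"
            by (rule est[OF eP a0P f g x y(2)]) (use eW y(1) in blast)
        qed
        also have "\<dots> < e" using s0 unfolding \<eta>_def by (simp add: field_simps)
        finally show "e' \<in> {x \<in> topspace (subtopology euclidean (P \<alpha>)). x \<circ> f \<in> b}"
          using eP b i by simp
      qed
      ultimately show "\<exists>T. openin (subtopology euclidean (P \<alpha>)) T \<and> a0 \<in> T \<and>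
          T \<subseteq> {x \<in> topspace (subtopology euclidean (P \<alpha>)). x \<circ> f \<in> b}" by blast
    qed
  qed
  have "continuous_map (subtopology euclidean (P \<alpha>)) (subtopology (topology_generated_by B) FVk) (\<lambda>e'. e' \<circ> f)"
    by (rule continuous_map_into_subtopology[OF gen]) (use polar_comp_FVk[OF f] in auto)
  then show ?thesis by (simp add: Tk_eq)
qed

lemma UC_relcompact:
  assumes f: "f \<in> FVe" and uc: "UC f \<alpha>"
  shows "rel_compact_in Tk ((\<lambda>e'. e' \<circ> f) ` P \<alpha>)"
proof -
  have "compactin (subtopology euclidean (P \<alpha>)) (P \<alpha>)"
    by (simp add: compactin_subtopology P_compact)
  then have c: "compactin Tk ((\<lambda>e'. e' \<circ> f) ` P \<alpha>)"
    by (rule image_compactin[OF _ Phi_cont[OF f uc]])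
  then have "closedin Tk ((\<lambda>e'. e' \<circ> f) ` P \<alpha>)" by (rule compactin_imp_closedin[OF Tk_hausdorff])
  then show ?thesis using c by (simp add: rel_compact_in_def closure_of_closedin)
qed


lemma mod_sc: "module sc" using E_vs module_iff_vector_space by blast
lemma sc_sc: "sc a (sc b x) = sc (a * b) x" by (rule module.scale_scale[OF mod_sc])
lemma sc_1: "sc 1 x = x" by (rule module.scale_one[OF mod_sc])
lemma sc_add: "sc a (x + y) = sc a x + sc a y" by (rule module.scale_right_distrib[OF mod_sc])

abbreviation N :: "('w \<Rightarrow> 'e) \<Rightarrow> 'j \<Rightarrow> 'm \<Rightarrow> 'e set" where
  "N f j m \<equiv> {sc (of_real (\<nu> j m x)) (TE m f x) | x. x \<in> \<omega> m}"

lemma ball0_open: "\<eta> > 0 \<Longrightarrow> openin Te {y. p \<alpha> y < \<eta>}"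
  using sn_ball_open[of 0 UNIV \<eta> p \<alpha>] by simp

lemma precompact_step:
  assumes K: "precompact_in Te K" and eta: "\<eta> > 0"
  shows "\<exists>F. finite F \<and> (\<forall>v\<in>K. \<exists>y\<in>F. p \<alpha> (v - y) < \<eta>)"
proof -
  have "openin Te {y. p \<alpha> y < \<eta>} \<and> 0 \<in> {y. p \<alpha> y < \<eta>}"
    using ball0_open[OF eta] eta by (simp add: sn_0[OF E_vs sn_p])
  then obtain F where F: "finite F" "K \<subseteq> (\<Union>x\<in>F. (\<lambda>u. x + u) ` {y. p \<alpha> y < \<eta>})"
    using K unfolding precompact_in_def by blast
  have "\<forall>v\<in>K. \<exists>y\<in>F. p \<alpha> (v - y) < \<eta>"
  proof
    fix v assume "v \<in> K"
    then obtain y u where "y \<in> F" "p \<alpha> u < \<eta>" "v = y + u" using F(2) by blast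
    then show "\<exists>y\<in>F. p \<alpha> (v - y) < \<eta>" by (intro bexI[of _ y]) simp_all
  qed
  then show ?thesis using F(1) by blast
qed

lemma b_UC:
  assumes "\<forall>j m. \<exists>K. precompact_in Te K \<and> N f j m \<subseteq> K"
  shows "UC f \<alpha>"
  unfolding UC_def
proof (intro allI impI)
  fix j m and \<eta> :: real assume eta: "\<eta> > 0"
  obtain K where K: "precompact_in Te K" "N f j m \<subseteq> K" using assms by blast
  obtain F where F: "finite F" "\<forall>v\<in>K. \<exists>y\<in>F. p \<alpha> (v - y) < \<eta>" using precompact_step[OF K(1) eta] by blast
  have "\<forall>x\<in>\<omega> m. \<exists>y\<in>F. p \<alpha> (sc (of_real (\<nu> j m x)) (TE m f x) - y) \<le> \<eta>"
  proof
    fix x assume "x \<in> \<omega> m"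
    then have "sc (of_real (\<nu> j m x)) (TE m f x) \<in> K" using K(2) by blast
    then show "\<exists>y\<in>F. p \<alpha> (sc (of_real (\<nu> j m x)) (TE m f x) - y) \<le> \<eta>" using F(2) by (meson less_imp_le)
  qed
  then show "\<exists>F. finite F \<and> (\<forall>x\<in>\<omega> m. \<exists>y\<in>F. p \<alpha> (sc (of_real (\<nu> j m x)) (TE m f x) - y) \<le> \<eta>)"
    using F(1) by blast
qed

lemma absorb:
  fixes M \<delta> r :: real and c :: 'k and t :: real
  assumes "t \<le> \<bar>M\<bar>" "t \<ge> 0" "\<delta> > 0" "r = (\<bar>M\<bar> + 1) / \<delta>" "norm c \<ge> r"
  shows "norm (inverse c) * t < \<delta>" "c \<noteq> 0"
proof -
  have r0: "r > 0" using assms by simp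
  then have c0: "norm c > 0" using assms by linarith
  then show "c \<noteq> 0" by simp
  have "t / norm c \<le> \<bar>M\<bar> / r" by (rule frac_le) (use assms r0 in auto)
  also have "\<bar>M\<bar> / r < \<delta>"
  proof -
    have "\<delta> * r = \<bar>M\<bar> + 1" using assms(3,4) by simp
    then show ?thesis using r0 by (simp add: pos_divide_less_eq)
  qed
  finally show "norm (inverse c) * t < \<delta>" by (simp add: norm_inverse divide_inverse mult.commute)
qed

lemma N_bounded:
  assumes f: "f \<in> FVe"
  shows "tvs_bounded sc Te (N f j m)"
  unfolding tvs_bounded_def
proof (intro allI impI, elim conjE)
  fix U assume U: "openin Te U" "0 \<in> U"
  obtain \<beta> \<delta> where d: "\<delta> > 0" "\<forall>y. p \<beta> (y - 0) < \<delta> \<longrightarrow> y \<in> U" using Te_nbhd[OF U] by blast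
  define M where "M = (SUP x\<in>\<omega> m. p \<beta> (TE m f x) * \<nu> j m x)"
  define r where "r = (\<bar>M\<bar> + 1) / \<delta>"
  have r0: "r > 0" using d by (simp add: r_def)
  have "\<forall>c. norm c \<ge> r \<longrightarrow> N f j m \<subseteq> sc c ` U"
  proof (intro allI impI subsetI)
    fix c :: 'k and v assume c: "norm c \<ge> r" and v: "v \<in> N f j m"
    then obtain x where x: "x \<in> \<omega> m" "v = sc (of_real (\<nu> j m x)) (TE m f x)" by blast
    have pv: "p \<beta> v = p \<beta> (TE m f x) * \<nu> j m x"
      using x \<nu>_nonneg sn_scale_real[OF E_vs sn_p] by (simp add: mult.commute)
    have "p \<beta> v \<le> M" unfolding pv M_def by (rule cSUP_upper[OF x(1) FVe_bdd[OF f]])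
    then have pM: "p \<beta> v \<le> \<bar>M\<bar>" by simp
    have pv0: "p \<beta> v \<ge> 0" by (rule sn_nonneg[OF E_vs sn_p])
    have ab: "norm (inverse c) * p \<beta> v < \<delta>" "c \<noteq> 0" using absorb[OF pM pv0 d(1) r_def c] by auto
    have "p \<beta> (sc (inverse c) v) = norm (inverse c) * p \<beta> v" by (rule sn_scale[OF E_vs sn_p])
    then have "sc (inverse c) v \<in> U" using d(2) ab(1) by simp
    moreover have "v = sc c (sc (inverse c) v)" using ab(2) by (simp add: sc_sc sc_1)
    ultimately show "v \<in> sc c ` U" by blast
  qed
  then show "\<exists>r>0. \<forall>c. r \<le> norm c \<longrightarrow> N f j m \<subseteq> sc c ` U" using r0 by blast
qed

lemma compact_precompact:
  assumes K: "compactin Te K"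
  shows "precompact_in Te K"
  unfolding precompact_in_def
proof (intro allI impI, elim conjE)
  fix U assume U: "openin Te U" "0 \<in> U"
  obtain \<beta> \<delta> where d: "\<delta> > 0" "\<forall>y. p \<beta> (y - 0) < \<delta> \<longrightarrow> y \<in> U" using Te_nbhd[OF U] by blast
  define B where "B x = {y \<in> UNIV. p \<beta> (y - x) < \<delta>}" for x
  have oB: "openin Te (B x)" for x unfolding B_def by (rule sn_ball_open) (use d in auto)
  have xB: "x \<in> B x" for x using d by (simp add: B_def sn_0[OF E_vs sn_p])
  have "K \<subseteq> \<Union>(B ` K)" using xB by blast
  then obtain F' where F': "finite F'" "F' \<subseteq> B ` K" "K \<subseteq> \<Union>F'"
    using K oB unfolding compactin_def by (metis (no_types, lifting) imageE)
  obtain C where C: "C \<subseteq> K" "finite C" "F' = B ` C" using finite_subset_image[OF F'(1,2)] by blast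
  have "K \<subseteq> (\<Union>x\<in>C. (\<lambda>u. x + u) ` U)"
  proof
    fix y assume "y \<in> K"
    then obtain x where x: "x \<in> C" "y \<in> B x" using F'(3) C(3) by blast
    then have "y - x \<in> U" using d(2) by (simp add: B_def)
    then have "y \<in> (\<lambda>u. x + u) ` U" by (intro image_eqI[of _ _ "y - x"]) simp_all
    then show "y \<in> (\<Union>x\<in>C. (\<lambda>u. x + u) ` U)" using x(1) by blast
  qed
  then show "\<exists>F. finite F \<and> K \<subseteq> (\<Union>x\<in>F. (\<lambda>u. x + u) ` U)" using C(2) by blast
qed

lemma c1_UC:
  assumes sm: "semi_montel sc UNIV Te" and f: "f \<in> FVe"
  shows "UC f \<alpha>"
proof (rule b_UC, intro allI)
  fix j m
  have "rel_compact_in Te (N f j m)" using sm N_bounded[OF f] unfolding semi_montel_def by blast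
  then have c: "compactin Te (Te closure_of (N f j m))" by (simp add: rel_compact_in_def)
  have "N f j m \<subseteq> Te closure_of (N f j m)" by (rule closure_of_subset) (simp add: Te_topspace)
  then show "\<exists>K. precompact_in Te K \<and> N f j m \<subseteq> K" using compact_precompact[OF c] by blast
qed


lemma c2_UC:
  assumes sw: "schwartz_space sc Te" and f: "f \<in> FVe"
  shows "UC f \<alpha>"
  unfolding UC_def
proof (intro allI impI)
  fix j m and \<eta> :: real assume eta: "\<eta> > 0"
  define U where "U = {y. p \<alpha> y < \<eta>}"
  have U: "openin Te U" "0 \<in> U" using ball0_open[OF eta] eta by (simp_all add: U_def sn_0[OF E_vs sn_p])
  obtain V where V: "openin Te V" "0 \<in> V"
    "\<forall>\<epsilon>::real. \<epsilon> > 0 \<longrightarrow> (\<exists>F. finite F \<and> V \<subseteq> (\<Union>x\<in>F. (\<lambda>u. x + u) ` (sc (of_real \<epsilon>) ` U)))"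
    using sw U unfolding schwartz_space_def by blast
  obtain r where r: "r > 0" "\<forall>c. norm c \<ge> r \<longrightarrow> N f j m \<subseteq> sc c ` V"
    using N_bounded[OF f, of j m] V(1,2) unfolding tvs_bounded_def by blast
  define c :: 'k where "c = of_real r"
  have cN: "N f j m \<subseteq> sc c ` V" using r by (simp add: c_def)
  have e1: "1/r > 0" using r(1) by simp
  obtain F where F: "finite F" "V \<subseteq> (\<Union>x\<in>F. (\<lambda>u. x + u) ` (sc (of_real (1/r)) ` U))"
    using V(3)[rule_format, OF e1] by blast
  have "\<forall>x\<in>\<omega> m. \<exists>y\<in>sc c ` F. p \<alpha> (sc (of_real (\<nu> j m x)) (TE m f x) - y) \<le> \<eta>"
  proof
    fix x assume x: "x \<in> \<omega> m"
    define v where "v = sc (of_real (\<nu> j m x)) (TE m f x)"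
    have "v \<in> N f j m" using x by (auto simp: v_def)
    then obtain w where w: "w \<in> V" "v = sc c w" using cN by blast
    then obtain y u where yu: "y \<in> F" "u \<in> U" "w = y + sc (of_real (1/r)) u" using F(2) by blast
    have "v = sc c y + sc (c * of_real (1/r)) u" using w(2) yu(3) by (simp add: sc_add sc_sc)
    also have "c * of_real (1/r) = 1" using r(1) by (simp add: c_def flip: of_real_mult)
    finally have "v - sc c y = u" by (simp add: sc_1)
    then have "p \<alpha> (v - sc c y) < \<eta>" using yu(2) by (simp add: U_def)
    then show "\<exists>y\<in>sc c ` F. p \<alpha> (sc (of_real (\<nu> j m x)) (TE m f x) - y) \<le> \<eta>"
      using yu(1) by (intro bexI[of _ "sc c y"]) (simp_all add: v_def)
  qed
  then show "\<exists>F. finite F \<and> (\<forall>x\<in>\<omega> m. \<exists>y\<in>F. p \<alpha> (sc (of_real (\<nu> j m x)) (TE m f x) - y) \<le> \<eta>)"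
    using F(1) by blast
qed

lemma d_UC:
  assumes H: "\<forall>\<epsilon>>0. \<forall>j m \<alpha>. \<exists>K\<in>\<KK>.
              (\<exists>\<delta><\<epsilon>. \<forall>x\<in>\<omega> m. \<pi> x \<notin> K \<longrightarrow> p \<alpha> (TE m f x) * \<nu> j m x \<le> \<delta>) \<and>
              precompact_in Te {sc (of_real (\<nu> j m x)) (TE m f x) | x. x \<in> \<omega> m \<and> \<pi> x \<in> K}"
  shows "UC f \<alpha>"
  unfolding UC_def
proof (intro allI impI)
  fix j m and \<eta> :: real assume eta: "\<eta> > 0"
  obtain K \<delta> where K: "\<delta> < \<eta>" "\<forall>x\<in>\<omega> m. \<pi> x \<notin> K \<longrightarrow> p \<alpha> (TE m f x) * \<nu> j m x \<le> \<delta>"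
    "precompact_in Te {sc (of_real (\<nu> j m x)) (TE m f x) | x. x \<in> \<omega> m \<and> \<pi> x \<in> K}"
    using H eta by meson
  obtain F where F: "finite F" "\<forall>v\<in>{sc (of_real (\<nu> j m x)) (TE m f x) | x. x \<in> \<omega> m \<and> \<pi> x \<in> K}.
      \<exists>y\<in>F. p \<alpha> (v - y) < \<eta>"
    using precompact_step[OF K(3) eta] by blast
  have "\<forall>x\<in>\<omega> m. \<exists>y\<in>insert 0 F. p \<alpha> (sc (of_real (\<nu> j m x)) (TE m f x) - y) \<le> \<eta>"
  proof
    fix x assume x: "x \<in> \<omega> m"
    show "\<exists>y\<in>insert 0 F. p \<alpha> (sc (of_real (\<nu> j m x)) (TE m f x) - y) \<le> \<eta>"
    proof (cases "\<pi> x \<in> K")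
      case True
      then have "sc (of_real (\<nu> j m x)) (TE m f x) \<in> {sc (of_real (\<nu> j m x)) (TE m f x) | x. x \<in> \<omega> m \<and> \<pi> x \<in> K}"
        using x by blast
      then obtain y where "y \<in> F" "p \<alpha> (sc (of_real (\<nu> j m x)) (TE m f x) - y) < \<eta>" using F(2) by blast
      then show ?thesis by (meson insertI2 less_imp_le)
    next
      case False
      have "p \<alpha> (sc (of_real (\<nu> j m x)) (TE m f x) - 0) = p \<alpha> (TE m f x) * \<nu> j m x"
        using x \<nu>_nonneg sn_scale_real[OF E_vs sn_p] by (simp add: mult.commute)
      also have "\<dots> \<le> \<delta>" using K(2) x False by blast
      finally show ?thesis using K(1) by (intro bexI[of _ 0]) simp_all
    qed
  qed
  then show "\<exists>F. finite F \<and> (\<forall>x\<in>\<omega> m. \<exists>y\<in>F. p \<alpha> (sc (of_real (\<nu> j m x)) (TE m f x) - y) \<le> \<eta>)"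
    using F(1) by blast
qed

lemma a_relcompact:
  assumes sm: "semi_montel (\<lambda>c (f::'w \<Rightarrow> 'k). \<lambda>w. c * f w) FVk Tk" and f: "f \<in> FVe"
  shows "rel_compact_in Tk ((\<lambda>e'. e' \<circ> f) ` P \<alpha>)"
proof -
  have sub: "(\<lambda>e'. e' \<circ> f) ` P \<alpha> \<subseteq> FVk" using polar_comp_FVk[OF f] by blast
  have "tvs_bounded (\<lambda>c (f::'w \<Rightarrow> 'k). \<lambda>w. c * f w) Tk ((\<lambda>e'. e' \<circ> f) ` P \<alpha>)"
    unfolding tvs_bounded_def
  proof (intro allI impI, elim conjE)
    fix U assume U: "openin Tk U" "0 \<in> U"
    obtain i \<delta> where d: "\<delta> > 0" "\<forall>y\<in>FVk. qk i (y - 0) < \<delta> \<longrightarrow> y \<in> U" using Tk_nbhd[OF U] by blast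
    obtain j m where i: "i = (j, m)" by (cases i)
    define M where "M = (SUP x\<in>\<omega> m. p \<alpha> (TE m f x) * \<nu> j m x)"
    define r where "r = (\<bar>M\<bar> + 1) / \<delta>"
    have r0: "r > 0" using d by (simp add: r_def)
    have "\<forall>c. norm c \<ge> r \<longrightarrow> (\<lambda>e'. e' \<circ> f) ` P \<alpha> \<subseteq> (\<lambda>c (f::'w \<Rightarrow> 'k). \<lambda>w. c * f w) c ` U"
    proof (intro allI impI subsetI)
      fix c :: 'k and h assume c: "norm c \<ge> r" and h: "h \<in> (\<lambda>e'. e' \<circ> f) ` P \<alpha>"
      then obtain e' where e: "e' \<in> P \<alpha>" "h = e' \<circ> f" by blast
      have hF: "h \<in> FVk" using e polar_comp_FVk[OF f] by simp
      have qM: "qk (j, m) h \<le> \<bar>M\<bar>" using polar_qk[OF f e(1), of j m] e(2) by (simp add: M_def)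
      have q0: "qk (j, m) h \<ge> 0" by (rule qk_nonneg[OF hF])
      have ab: "norm (inverse c) * qk (j, m) h < \<delta>" "c \<noteq> 0" using absorb[OF qM q0 d(1) r_def c] by auto
      define u where "u = (\<lambda>w. inverse c * h w)"
      have uF: "u \<in> FVk" unfolding u_def by (rule FVk_scale[OF hF])
      have "qk (j, m) u \<le> norm (inverse c) * qk (j, m) h" unfolding u_def by (rule qk_scale_le[OF hF])
      then have "u \<in> U" using d(2) uF ab(1) i by simp
      moreover have "h = (\<lambda>w. c * u w)" using ab(2) by (simp add: u_def fun_eq_iff mult.assoc[symmetric])
      ultimately show "h \<in> (\<lambda>c (f::'w \<Rightarrow> 'k). \<lambda>w. c * f w) c ` U" by blast
    qed
    then show "\<exists>r>0. \<forall>c. r \<le> norm c \<longrightarrow> (\<lambda>e'. e' \<circ> f) ` P \<alpha> \<subseteq> (\<lambda>c (f::'w \<Rightarrow> 'k). \<lambda>w. c * f w) c ` U"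
      using r0 by blast
  qed
  then show ?thesis using sm sub unfolding semi_montel_def by blast
qed


lemma main:
  assumes conds:
      "semi_montel (\<lambda>c (f::'w \<Rightarrow> 'k). \<lambda>w. c * f w) FVk Tk
       \<or> (\<forall>f\<in>FVe. \<forall>j m. \<exists>K. precompact_in Te K \<and>
              {sc (of_real (\<nu> j m x)) (TE m f x) | x. x \<in> \<omega> m} \<subseteq> K)
       \<or> (semi_montel sc UNIV Te \<or> schwartz_space sc Te)
       \<or> (\<exists>(\<KK>::'X set set) (\<pi>::'x \<Rightarrow> 'X). \<forall>f\<in>FVe. \<forall>\<epsilon>>0. \<forall>j m \<alpha>. \<exists>K\<in>\<KK>.
              (\<exists>\<delta><\<epsilon>. \<forall>x\<in>\<omega> m. \<pi> x \<notin> K \<longrightarrow> p \<alpha> (TE m f x) * \<nu> j m x \<le> \<delta>) \<and>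
              precompact_in Te {sc (of_real (\<nu> j m x)) (TE m f x) | x. x \<in> \<omega> m \<and> \<pi> x \<in> K})"
  shows "FVe \<subseteq> FV_kappa sc p FVk Tk"
proof
  fix f assume f: "f \<in> FVe"
  have rc: "rel_compact_in Tk ((\<lambda>e'. e' \<circ> f) ` P \<alpha>)" for \<alpha>
  proof -
    consider (a) "semi_montel (\<lambda>c (f::'w \<Rightarrow> 'k). \<lambda>w. c * f w) FVk Tk"
      | (b) "\<forall>f\<in>FVe. \<forall>j m. \<exists>K. precompact_in Te K \<and> {sc (of_real (\<nu> j m x)) (TE m f x) | x. x \<in> \<omega> m} \<subseteq> K"
      | (c1) "semi_montel sc UNIV Te" | (c2) "schwartz_space sc Te"
      | (d) "\<exists>(\<KK>::'X set set) (\<pi>::'x \<Rightarrow> 'X). \<forall>f\<in>FVe. \<forall>\<epsilon>>0. \<forall>j m \<alpha>. \<exists>K\<in>\<KK>.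
              (\<exists>\<delta><\<epsilon>. \<forall>x\<in>\<omega> m. \<pi> x \<notin> K \<longrightarrow> p \<alpha> (TE m f x) * \<nu> j m x \<le> \<delta>) \<and>
              precompact_in Te {sc (of_real (\<nu> j m x)) (TE m f x) | x. x \<in> \<omega> m \<and> \<pi> x \<in> K}"
      using conds by blast
    then show ?thesis
    proof cases
      case a then show ?thesis by (rule a_relcompact[OF _ f])
    next
      case b
      then have "UC f \<alpha>" using f by (intro b_UC) blast
      then show ?thesis by (rule UC_relcompact[OF f])
    next
      case c1
      then show ?thesis using UC_relcompact[OF f c1_UC[OF c1 f]] by blast
    next
      case c2
      then show ?thesis using UC_relcompact[OF f c2_UC[OF c2 f]] by blast
    next
      case d
      then obtain \<KK> :: "'X set set" and \<pi> :: "'x \<Rightarrow> 'X" where H: "\<forall>f\<in>FVe. \<forall>\<epsilon>>0. \<forall>j m \<alpha>. \<exists>K\<in>\<KK>.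
              (\<exists>\<delta><\<epsilon>. \<forall>x\<in>\<omega> m. \<pi> x \<notin> K \<longrightarrow> p \<alpha> (TE m f x) * \<nu> j m x \<le> \<delta>) \<and>
              precompact_in Te {sc (of_real (\<nu> j m x)) (TE m f x) | x. x \<in> \<omega> m \<and> \<pi> x \<in> K}" by blast
      have "UC f \<alpha>" by (rule d_UC[where \<KK>=\<KK> and \<pi>=\<pi>]) (use H f in blast)
      then show ?thesis by (rule UC_relcompact[OF f])
    qed
  qed
  show "f \<in> FV_kappa sc p FVk Tk" unfolding FV_kappa_def using sigma[OF f] rc by blast
qed

end

theorem lemma3p13:
  fixes sc :: "'k::real_normed_field \<Rightarrow> 'e::ab_group_add \<Rightarrow> 'e"
    and p :: "'a \<Rightarrow> 'e \<Rightarrow> real"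
    and \<omega> :: "'m \<Rightarrow> 'x set"
    and \<nu> :: "'j \<Rightarrow> 'm \<Rightarrow> 'x \<Rightarrow> real"
    and APK :: "('w \<Rightarrow> 'k) set" and domK :: "'m \<Rightarrow> ('w \<Rightarrow> 'k) set"
    and TK :: "'m \<Rightarrow> ('w \<Rightarrow> 'k) \<Rightarrow> ('x \<Rightarrow> 'k)"
    and APE :: "('w \<Rightarrow> 'e) set" and domE :: "'m \<Rightarrow> ('w \<Rightarrow> 'e) set"
    and TE :: "'m \<Rightarrow> ('w \<Rightarrow> 'e) \<Rightarrow> ('x \<Rightarrow> 'e)"
  defines "FVk \<equiv> FVK APK domK TK \<omega> \<nu>"
    and "qk \<equiv> FVK_sn TK \<omega> \<nu>"
    and "Tk \<equiv> sn_top (FVK APK domK TK \<omega> \<nu>) (FVK_sn TK \<omega> \<nu>)"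
    and "FVe \<equiv> FVE p APE domE TE \<omega> \<nu>"
    and "qe \<equiv> FVE_sn p TE \<omega> \<nu>"
    and "Te \<equiv> sn_top UNIV p"
    and "E' \<equiv> dual_space sc p"
  assumes E_vs: "vector_space sc"
    and E_seminorms: "\<forall>\<alpha>. is_seminorm sc (p \<alpha>)"
    and E_hausdorff: "sn_hausdorff UNIV p"
    and E_directed: "sn_directed UNIV p"
    and E_nontrivial: "\<exists>x::'e. x \<noteq> 0"
    and \<omega>_ne: "\<forall>m. \<omega> m \<noteq> {}"
    and \<nu>_nonneg: "\<forall>j m. \<forall>x\<in>\<omega> m. \<nu> j m x \<ge> 0"
    and \<nu>_pos: "\<forall>m. \<forall>x\<in>\<omega> m. \<exists>j. \<nu> j m x > 0"
    and APK_sub: "fun_subspace (*) APK"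
    and APE_sub: "fun_subspace sc APE"
    and domK_sub: "\<forall>m. fun_subspace (*) (domK m)"
    and domE_sub: "\<forall>m. fun_subspace sc (domE m)"
    and TK_lin: "\<forall>m. lin_on (*) (domK m) (\<omega> m) (TK m)"
    and TE_lin: "\<forall>m. lin_on sc (domE m) (\<omega> m) (TE m)"
    \<comment> \<open>generator: FV(\<Omega>) and FV(\<Omega>,E) are dom-spaces\<close>
    and FVk_hausdorff: "sn_hausdorff FVk qk"
    and FVk_directed: "sn_directed FVk qk"
    and FVk_delta: "\<forall>w. continuous_map Tk euclidean (\<lambda>f. f w)"
    and FVe_hausdorff: "sn_hausdorff FVe qe"
    and FVe_directed: "sn_directed FVe qe"
    \<comment> \<open>the generator is strong\<close>
    and strong: "\<forall>e'\<in>E'. \<forall>f\<in>FVe. \<forall>m. e' \<circ> f \<in> APK \<and> e' \<circ> f \<in> domK m \<and>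
                    (\<forall>x\<in>\<omega> m. TK m (e' \<circ> f) x = e' (TE m f x))"
    and conds:
      "semi_montel (\<lambda>c (f::'w \<Rightarrow> 'k). \<lambda>w. c * f w) FVk Tk
       \<or> (\<forall>f\<in>FVe. \<forall>j m. \<exists>K. precompact_in Te K \<and>
              {sc (of_real (\<nu> j m x)) (TE m f x) | x. x \<in> \<omega> m} \<subseteq> K)
       \<or> (semi_montel sc UNIV Te \<or> schwartz_space sc Te)
       \<or> (\<exists>(\<KK>::'X set set) (\<pi>::'x \<Rightarrow> 'X). \<forall>f\<in>FVe. \<forall>\<epsilon>>0. \<forall>j m \<alpha>. \<exists>K\<in>\<KK>.
              (\<exists>\<delta><\<epsilon>. \<forall>x\<in>\<omega> m. \<pi> x \<notin> K \<longrightarrow> p \<alpha> (TE m f x) * \<nu> j m x \<le> \<delta>) \<and>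
              precompact_in Te {sc (of_real (\<nu> j m x)) (TE m f x) | x. x \<in> \<omega> m \<and> \<pi> x \<in> K})"
  shows "FVe \<subseteq> FV_kappa sc p FVk Tk"
  proof -
  have L: "L13 sc p \<omega> \<nu> APK domK TK APE domE TE"
    unfolding L13_def
    using E_vs E_seminorms E_directed \<omega>_ne \<nu>_nonneg APK_sub domK_sub TK_lin FVk_hausdorff FVk_directed strong
    by (simp add: FVk_def qk_def FVe_def E'_def)
  have "FVE p APE domE TE \<omega> \<nu> \<subseteq> FV_kappa sc p (FVK APK domK TK \<omega> \<nu>) (sn_top (FVK APK domK TK \<omega> \<nu>) (FVK_sn TK \<omega> \<nu>))"
    by (rule L13.main[OF L]) (use conds in \<open>simp add: FVk_def Tk_def FVe_def Te_def\<close>)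
  then show ?thesis by (simp add: FVk_def Tk_def FVe_def)
qed

end
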